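(* Let $n<7$, $n\ge2$ be a fixed real number, let $m=(n+3)/2$, let $\nu_1,\nu_2\ge0$ and $T>0$. Let $u_1,\omega_1,\psi_1:[0,T)\times[0,\infty)\times\mathbb{R}\to\mathbb{R}$ be smooth functions which, for each $t$, are even in $r$ (extend to smooth functions on $\mathbb{R}^2$ even in $r$) and which, with all their derivatives, decay rapidly as $r^2+z^2\to\infty$, uniformly on compact time subintervals. Suppose that on $(0,T)\times(0,\infty)\times\mathbb{R}$ $$u_{1,t}+u^ru_{1,r}+u^zu_{1,z}=2u_1\psi_{1,z}+\nu_1\Delta_nu_1,$$ $$\omega_{1,t}+u^r\omega_{1,r}+u^z\omega_{1,z}=(u_1^2)_z+\nu_2\Delta_n\omega_1,$$ $$-\Delta_n\psi_1=\omega_1,$$ where $\Delta_n=\partial_r^2+\frac nr\partial_r+\partial_z^2$, $u^r=-r\psi_{1,z}$ and $u^z=(m-1)\psi_1+r\psi_{1,r}$. Then for all $t\in(0,T)$, $$\frac12\frac{d}{dt}\int_{\mathbb{R}}\int_0^\infty\Big(u_1^2+\frac{7-n}{4}\big(\psi_{1,r}^2+\psi_{1,z}^2\big)\Big)r^n\,dr\,dz=-\nu_1\int_{\mathbb{R}}\int_0^\infty\big(u_{1,r}^2+u_{1,z}^2\big)r^n\,dr\,dz-\nu_2\,\frac{7-n}{4}\int_{\mathbb{R}}\int_0^\infty(\Delta_n\psi_1)^2\,r^n\,dr\,dz .$$ In particular the (nonnegative) generalized energy $\int\!\!\int\big(u_1^2+\frac{7-n}{4}|\nabla\psi_1|^2\big)r^n\,dr\,dz$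 is non-increasing in time, and conserved when $\nu_1=\nu_2=0$.
   Context: This is the "generalized axisymmetric Boussinesq system": the density $\Gamma=r^2u_1$ satisfies $\Gamma_t+u^r\Gamma_r+u^z\Gamma_z=\nu_1(\Gamma_{rr}+\frac{n-4}{r}\Gamma_r+\frac{6-2n}{r^2}\Gamma+\Gamma_{zz})$ (equivalent to the stated $u_1$ equation), the source term in the $\omega_1$ equation is $(\Gamma^2/r^4)_z=(u_1^2)_z$, and the term $-(n-3)\psi_{1,z}\omega_1$ of the generalized Navier--Stokes equations is removed. The velocity is $u^r=-(r^{m-1}\psi_1)_z/r^{m-2}$, $u^z=(r^{m-1}\psi_1)_r/r^{m-2}$ with $m=(n+3)/2$, which satisfies $(r^{m-2}u^r)_r+(r^{m-2}u^z)_z=0$. Here $\nabla=(\partial_r,\partial_z)$. *)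

theory Defs
  imports "HOL-Analysis.Analysis"
begin

definition pd :: "'a::euclidean_space \<Rightarrow> ('a \<Rightarrow> real) \<Rightarrow> 'a \<Rightarrow> real" where
  "pd v g x = deriv (\<lambda>h. g (x + h *\<^sub>R v)) 0"

fun iter_pd :: "'a::euclidean_space list \<Rightarrow> ('a \<Rightarrow> real) \<Rightarrow> 'a \<Rightarrow> real" where
  "iter_pd [] f = f"
| "iter_pd (v # vs) f = pd v (iter_pd vs f)"

definition smooth_on :: "'a::euclidean_space set \<Rightarrow> ('a \<Rightarrow> real) \<Rightarrow> bool" where
  "smooth_on S f \<longleftrightarrow>
     (\<forall>vs. set vs \<subseteq> Basis \<longrightarrow>
        continuous_on S (iter_pd vs f) \<and>
        (\<forall>v\<in>Basis. \<forall>x\<in>S.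
            ((\<lambda>h. iter_pd vs f (x + h *\<^sub>R v)) has_real_derivative iter_pd (v # vs) f x) (at 0)))"

definition rapid_decay :: "real \<Rightarrow> (real \<times> real \<times> real \<Rightarrow> real) \<Rightarrow> bool" where
  "rapid_decay T f \<longleftrightarrow>
     (\<forall>a b (vs :: (real \<times> real \<times> real) list) (k::nat).
        0 < a \<and> a \<le> b \<and> b < T \<and> set vs \<subseteq> Basis \<longrightarrow>
        (\<exists>C. \<forall>t\<in>{a..b}. \<forall>r z. (1 + r\<^sup>2 + z\<^sup>2) ^ k * \<bar>iter_pd vs f (t, r, z)\<bar> \<le> C))"

definition dt :: "(real \<Rightarrow> real \<Rightarrow> real \<Rightarrow> real) \<Rightarrow> real \<Rightarrow> real \<Rightarrow> real \<Rightarrow> real" where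
  "dt f t r z = deriv (\<lambda>s. f s r z) t"
definition dr :: "(real \<Rightarrow> real \<Rightarrow> real \<Rightarrow> real) \<Rightarrow> real \<Rightarrow> real \<Rightarrow> real \<Rightarrow> real" where
  "dr f t r z = deriv (\<lambda>s. f t s z) r"
definition dz :: "(real \<Rightarrow> real \<Rightarrow> real \<Rightarrow> real) \<Rightarrow> real \<Rightarrow> real \<Rightarrow> real \<Rightarrow> real" where
  "dz f t r z = deriv (\<lambda>s. f t r s) z"

definition lap_n :: "real \<Rightarrow> (real \<Rightarrow> real \<Rightarrow> real \<Rightarrow> real) \<Rightarrow> real \<Rightarrow> real \<Rightarrow> real \<Rightarrow> real" where
  "lap_n n f t r z = dr (dr f) t r z + n / r * dr f t r z + dz (dz f) t r z"

definition gen_energy :: "real \<Rightarrow> (real \<Rightarrow> real \<Rightarrow> real \<Rightarrow> real) \<Rightarrow> (real \<Rightarrow> real \<Rightarrow> real \<Rightarrow> real) \<Rightarrow> real \<Rightarrow> real" where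
  "gen_energy n u1 psi1 t =
     (LINT z|lborel. (LINT r:{0<..}|lborel.
        ((u1 t r z)\<^sup>2 + (7 - n) / 4 * ((dr psi1 t r z)\<^sup>2 + (dz psi1 t r z)\<^sup>2)) * r powr n))"

end

theory Submission
  imports Defs
begin

lemma integrable_inv_sq: "integrable lborel (\<lambda>x::real. inverse (1 + x\<^sup>2))"
proof -
  have "set_integrable lborel (einterval (-\<infinity>) \<infinity>) (\<lambda>x::real. inverse (1 + x\<^sup>2))"
  proof (rule interval_integral_FTC_nonneg(1)[where F=arctan and A="-(pi/2)" and B="pi/2"])
    show "((arctan \<circ> real_of_ereal) \<longlongrightarrow> - (pi / 2)) (at_right (- \<infinity>))"
      by (simp add: ereal_tendsto_simps tendsto_arctan_at_bot)
    show "((arctan \<circ> real_of_ereal) \<longlongrightarrow> (pi / 2)) (at_left \<infinity>)"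
      by (simp add: ereal_tendsto_simps tendsto_arctan_at_top)
  qed (auto intro!: DERIV_arctan continuous_intros, smt (verit) zero_le_power2)
  then show ?thesis by (simp add: set_integrable_def)
qed

lemma ftc_half:
  fixes A A' :: "real \<Rightarrow> real"
  assumes "\<And>r. 0 < r \<Longrightarrow> (A has_real_derivative A' r) (at r)"
    and "\<And>r. 0 < r \<Longrightarrow> isCont A' r"
    and "set_integrable lborel {0<..} A'"
    and "(A \<longlongrightarrow> 0) (at_right 0)" and "(A \<longlongrightarrow> 0) at_top"
  shows "(LINT r:{0<..}|lborel. A' r) = 0"
proof -
  have "(LBINT x=ereal 0..\<infinity>. A' x) = 0 - 0"
  proof (rule interval_integral_FTC_integrable[where F=A])
    show "set_integrable lborel (einterval (ereal 0) \<infinity>) A'" using assms(3) by simp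
    show "((A \<circ> real_of_ereal) \<longlongrightarrow> 0) (at_right (ereal 0))"
      using assms(4) by (simp add: ereal_tendsto_simps)
    show "((A \<circ> real_of_ereal) \<longlongrightarrow> 0) (at_left \<infinity>)"
      using assms(5) by (simp add: ereal_tendsto_simps)
  qed (use assms(1,2) in \<open>auto simp: has_real_derivative_iff_has_vector_derivative[symmetric]\<close>)
  then show ?thesis by (simp add: interval_lebesgue_integral_def)
qed

lemma ftc_full:
  fixes B B' :: "real \<Rightarrow> real"
  assumes "\<And>r. (B has_real_derivative B' r) (at r)"
    and "\<And>r. isCont B' r"
    and "integrable lborel B'"
    and "(B \<longlongrightarrow> 0) at_bot" and "(B \<longlongrightarrow> 0) at_top"
  shows "(LINT r|lborel. B' r) = 0"
proof -
  have "(LBINT x=-\<infinity>..\<infinity>. B' x) = 0 - 0"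
  proof (rule interval_integral_FTC_integrable[where F=B])
    show "set_integrable lborel (einterval (-\<infinity>) \<infinity>) B'" using assms(3) by (simp add: set_integrable_def)
    show "((B \<circ> real_of_ereal) \<longlongrightarrow> 0) (at_right (-\<infinity>))"
      using assms(4) by (simp add: ereal_tendsto_simps)
    show "((B \<circ> real_of_ereal) \<longlongrightarrow> 0) (at_left \<infinity>)"
      using assms(5) by (simp add: ereal_tendsto_simps)
  qed (use assms(1,2) in \<open>auto simp: has_real_derivative_iff_has_vector_derivative[symmetric]\<close>)
  then show ?thesis by (simp add: interval_lebesgue_integral_def set_lebesgue_integral_def)
qed


definition J :: "(real \<Rightarrow> real \<Rightarrow> real) \<Rightarrow> real" where
  "J g = (LINT z|lborel. (LINT r:{0<..}|lborel. g r z))"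

definition hb :: "real \<Rightarrow> real \<Rightarrow> real" where
  "hb r z = inverse (1 + r\<^sup>2) * inverse (1 + z\<^sup>2)"

definition good :: "(real \<Rightarrow> real \<Rightarrow> real) \<Rightarrow> bool" where
  "good g \<longleftrightarrow> continuous_on ({0<..} \<times> UNIV) (\<lambda>(r, z). g r z) \<and>
     (\<exists>C. \<forall>r>0. \<forall>z. \<bar>g r z\<bar> \<le> C * hb r z)"

definition H :: "(real \<Rightarrow> real \<Rightarrow> real) \<Rightarrow> real \<Rightarrow> real \<Rightarrow> real" where
  "H g z r = indicator {0<..} r * g r z"

lemma hb_pos: "0 < hb r z"
  unfolding hb_def by (intro mult_pos_pos) (auto intro!: add_pos_nonneg)

lemma good_bound: "good g \<Longrightarrow> \<exists>C\<ge>0. \<forall>r>0. \<forall>z. \<bar>g r z\<bar> \<le> C * hb r z"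
proof -
  assume "good g"
  then obtain C where C: "\<forall>r>0. \<forall>z. \<bar>g r z\<bar> \<le> C * hb r z" by (auto simp: good_def)
  have "0 \<le> C * hb 1 0" using C[rule_format, of 1 0] by (meson abs_ge_zero order_trans zero_less_one)
  then have "0 \<le> C" using hb_pos[of 1 0] by (simp add: zero_le_mult_iff)
  with C show ?thesis by blast
qed

lemma good_cont_at: "good g \<Longrightarrow> 0 < r \<Longrightarrow> isCont (\<lambda>r. g r z) r"
proof -
  assume g: "good g" and r: "0 < r"
  have c: "continuous_on ({0<..} \<times> UNIV) (\<lambda>(r, z). g r z)" using g by (simp add: good_def)
  have "isCont (\<lambda>(r, z). g r z) (r, z)"
    using c r by (simp add: continuous_on_eq_continuous_at open_Times)
  then show ?thesis
    using continuous_at_compose[where f="\<lambda>r. (r, z)" and g="\<lambda>(r, z). g r z" and a=r]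
    by (simp add: o_def continuous_intros)
qed

lemma good_cont_at_z: "good g \<Longrightarrow> 0 < r \<Longrightarrow> isCont (\<lambda>z. g r z) z"
proof -
  assume g: "good g" and r: "0 < r"
  have c: "continuous_on ({0<..} \<times> UNIV) (\<lambda>(r, z). g r z)" using g by (simp add: good_def)
  have "isCont (\<lambda>(r, z). g r z) (r, z)"
    using c r by (simp add: continuous_on_eq_continuous_at open_Times)
  then show ?thesis
    using continuous_at_compose[where f="\<lambda>z. (r, z)" and g="\<lambda>(r, z). g r z" and a=z]
    by (simp add: o_def continuous_intros)
qed

lemma good_meas: "good g \<Longrightarrow> case_prod (H g) \<in> borel_measurable (lborel \<Otimes>\<^sub>M lborel)"
proof -
  assume g: "good g"
  have c: "continuous_on ({0<..} \<times> UNIV) (\<lambda>(r, z). g r z)" using g by (simp add: good_def)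
  have c2: "continuous_on (UNIV \<times> {0<..}) (\<lambda>(z, r). g r z)"
  proof -
    have "continuous_on (UNIV \<times> {0<..}) (\<lambda>x. (\<lambda>(r, z). g r z) ((\<lambda>(z, r). (r, z)) x))"
      by (rule continuous_on_compose2[OF c]) (auto intro!: continuous_intros simp: case_prod_unfold)
    then show ?thesis by (simp add: case_prod_unfold)
  qed
  have "(\<lambda>x. indicator (UNIV \<times> {0<..}) x *\<^sub>R (\<lambda>(z, r). g r z) x) \<in> borel_measurable borel"
    by (rule borel_measurable_continuous_on_indicator[OF _ c2]) (intro borel_open open_Times open_UNIV open_greaterThan)
  moreover have "(\<lambda>x. indicator (UNIV \<times> {0<..}) x *\<^sub>R (\<lambda>(z, r). g r z) x) = case_prod (H g)"
    by (auto simp: H_def indicator_def fun_eq_iff)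
  ultimately show ?thesis by (simp add: lborel_prod)
qed

lemma integrable_hb_z: "integrable lborel (\<lambda>r. C * hb r z)"
  unfolding hb_def using integrable_inv_sq
  by (intro integrable_mult_right integrable_mult_left) 

lemma good_slice_int: "good g \<Longrightarrow> set_integrable lborel {0<..} (\<lambda>r. g r z)"
proof -
  assume g: "good g"
  then obtain C where C: "\<forall>r>0. \<forall>z. \<bar>g r z\<bar> \<le> C * hb r z" by (auto simp: good_def)
  have m: "(\<lambda>r. H g z r) \<in> borel_measurable lborel"
    using measurable_Pair2[OF good_meas[OF g]] by simp
  show ?thesis unfolding set_integrable_def
  proof (rule Bochner_Integration.integrable_bound[OF integrable_hb_z[of C z]])
    show "(\<lambda>x. indicator {0<..} x *\<^sub>R g x z) \<in> borel_measurable lborel"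
      using m by (simp add: H_def)
    show "AE x in lborel. norm (indicator {0<..} x *\<^sub>R g x z) \<le> norm (C * hb x z)"
    proof (rule AE_I2)
      fix x show "norm (indicator {0<..} x *\<^sub>R g x z) \<le> norm (C * hb x z)"
      proof (cases "0 < x")
        case True
        then have "\<bar>g x z\<bar> \<le> \<bar>C * hb x z\<bar>" using C by (meson abs_ge_self order_trans)
        then show ?thesis using True by simp
      qed simp
    qed
  qed
qed

lemma good_int: "good g \<Longrightarrow> integrable (lborel \<Otimes>\<^sub>M lborel) (case_prod (H g))"
proof -
  assume g: "good g"
  then obtain C where C: "\<forall>r>0. \<forall>z. \<bar>g r z\<bar> \<le> C * hb r z" and C0: "0 \<le> C"
    using good_bound by blast
  show ?thesis
  proof (rule lborel_pair.Fubini_integrable)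
    show "case_prod (H g) \<in> borel_measurable (lborel \<Otimes>\<^sub>M lborel)" by (rule good_meas[OF g])
    show "AE x in lborel. integrable lborel (\<lambda>y. case_prod (H g) (x, y))"
      using good_slice_int[OF g] by (simp add: set_integrable_def H_def)
    have "integrable lborel (\<lambda>z. \<integral>r. C * hb r z \<partial>lborel)"
      unfolding hb_def using integrable_inv_sq by simp
    then show "integrable lborel (\<lambda>x. \<integral>y. norm (case_prod (H g) (x, y)) \<partial>lborel)"
    proof (rule Bochner_Integration.integrable_bound)
      show "(\<lambda>x. \<integral>y. norm (case_prod (H g) (x, y)) \<partial>lborel) \<in> borel_measurable lborel"
      proof -
        have "(\<lambda>(x, y). norm (H g x y)) \<in> borel_measurable (lborel \<Otimes>\<^sub>M lborel)"
          using good_meas[OF g] by measurable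
        from lborel.borel_measurable_lebesgue_integral[OF this] show ?thesis by simp
      qed
      show "AE x in lborel. norm (\<integral>y. norm (case_prod (H g) (x, y)) \<partial>lborel) \<le> norm (\<integral>r. C * hb r x \<partial>lborel)"
      proof (intro AE_I2)
        fix z
        have "(\<integral>y. norm (H g z y) \<partial>lborel) \<le> (\<integral>r. C * hb r z \<partial>lborel)"
        proof (rule integral_mono)
          show "integrable lborel (\<lambda>y. norm (H g z y))"
            using good_slice_int[OF g, of z] by (simp add: set_integrable_def H_def integrable_norm)
        qed (use integrable_hb_z C C0 hb_pos less_imp_le[OF hb_pos] in \<open>auto simp: H_def indicator_def
              intro: order_trans[OF _ abs_ge_self]\<close>)
        then show "norm (\<integral>y. norm (case_prod (H g) (z, y)) \<partial>lborel) \<le> norm (\<integral>r. C * hb r z \<partial>lborel)"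
          by (auto intro: order_trans[OF _ abs_ge_self] simp: integral_nonneg_AE)
      qed
    qed
  qed
qed

lemma J_prod: "good g \<Longrightarrow> J g = integral\<^sup>L (lborel \<Otimes>\<^sub>M lborel) (case_prod (H g))"
  unfolding J_def set_lebesgue_integral_def
  using lborel_pair.integral_fst[OF good_int, of g] by (simp add: H_def[abs_def])


lemma good_add: "good f \<Longrightarrow> good g \<Longrightarrow> good (\<lambda>r z. f r z + g r z)"
proof -
  assume f: "good f" and g: "good g"
  obtain C1 where C1: "\<forall>r>0. \<forall>z. \<bar>f r z\<bar> \<le> C1 * hb r z" using f by (auto simp: good_def)
  obtain C2 where C2: "\<forall>r>0. \<forall>z. \<bar>g r z\<bar> \<le> C2 * hb r z" using g by (auto simp: good_def)
  have "continuous_on ({0<..} \<times> UNIV) (\<lambda>x. (\<lambda>(r, z). f r z) x + (\<lambda>(r, z). g r z) x)"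
    using f g by (intro continuous_on_add) (auto simp: good_def)
  moreover have "\<forall>r>0. \<forall>z. \<bar>f r z + g r z\<bar> \<le> (C1 + C2) * hb r z"
    using C1 C2 by (auto simp: distrib_right intro!: order_trans[OF abs_triangle_ineq] add_mono)
  ultimately show ?thesis unfolding good_def by (auto simp: case_prod_unfold)
qed

lemma good_cmult: "good f \<Longrightarrow> good (\<lambda>r z. c * f r z)"
proof -
  assume f: "good f"
  obtain C1 where C1: "\<forall>r>0. \<forall>z. \<bar>f r z\<bar> \<le> C1 * hb r z" using f by (auto simp: good_def)
  have "continuous_on ({0<..} \<times> UNIV) (\<lambda>x. c * (\<lambda>(r, z). f r z) x)"
    using f by (intro continuous_on_mult continuous_on_const) (auto simp: good_def)
  moreover have "\<forall>r>0. \<forall>z. \<bar>c * f r z\<bar> \<le> (\<bar>c\<bar> * C1) * hb r z"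
    using C1 by (auto simp: abs_mult mult.assoc intro!: mult_left_mono)
  ultimately show ?thesis unfolding good_def by (auto simp: case_prod_unfold)
qed

lemma good_diff: "good f \<Longrightarrow> good g \<Longrightarrow> good (\<lambda>r z. f r z - g r z)"
  using good_add[OF _ good_cmult[of g "-1"], of f] by simp

lemma H_add: "H (\<lambda>r z. f r z + g r z) = (\<lambda>z r. H f z r + H g z r)"
  by (auto simp: H_def fun_eq_iff algebra_simps)

lemma J_add: "good f \<Longrightarrow> good g \<Longrightarrow> J (\<lambda>r z. f r z + g r z) = J f + J g"
proof -
  assume f: "good f" and g: "good g"
  have "J (\<lambda>r z. f r z + g r z) = integral\<^sup>L (lborel \<Otimes>\<^sub>M lborel) (\<lambda>x. case_prod (H f) x + case_prod (H g) x)"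
    by (subst J_prod[OF good_add[OF f g]]) (simp add: H_add case_prod_unfold)
  also have "\<dots> = J f + J g"
    by (simp add: J_prod[OF f] J_prod[OF g] Bochner_Integration.integral_add[OF good_int[OF f] good_int[OF g]])
  finally show ?thesis .
qed

lemma J_cmult: "good f \<Longrightarrow> J (\<lambda>r z. c * f r z) = c * J f"
proof -
  assume f: "good f"
  have "J (\<lambda>r z. c * f r z) = integral\<^sup>L (lborel \<Otimes>\<^sub>M lborel) (\<lambda>x. c * case_prod (H f) x)"
    by (subst J_prod[OF good_cmult[OF f]]) (simp add: H_def case_prod_unfold algebra_simps)
  also have "\<dots> = c * J f"
    by (simp add: J_prod[OF f])
  finally show ?thesis .
qed

lemma J_diff: "good f \<Longrightarrow> good g \<Longrightarrow> J (\<lambda>r z. f r z - g r z) = J f - J g"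
  using J_add[OF _ good_cmult[of g "-1"], of f] J_cmult[of g "-1"] by simp

lemma J_cong: "(\<And>r z. 0 < r \<Longrightarrow> f r z = g r z) \<Longrightarrow> J f = J g"
  unfolding J_def by (intro Bochner_Integration.integral_cong refl set_lebesgue_integral_cong) auto

lemma good_cong: "(\<And>r z. 0 < r \<Longrightarrow> f r z = g r z) \<Longrightarrow> good f \<Longrightarrow> good g"
proof -
  assume e: "\<And>r z. 0 < r \<Longrightarrow> f r z = g r z" and f: "good f"
  have c: "continuous_on ({0<..} \<times> UNIV) (\<lambda>(r, z). f r z)" using f by (simp add: good_def)
  have "continuous_on ({0<..} \<times> UNIV) (\<lambda>(r, z). g r z)"
    by (rule continuous_on_cong[THEN iffD1, OF refl _ c]) (auto simp: e)
  then show ?thesis using f e unfolding good_def by auto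
qed

lemma div_r:
  assumes d: "\<And>r z. 0 < r \<Longrightarrow> ((\<lambda>s. A s z) has_real_derivative A' r z) (at r)"
    and g: "good A'"
    and l0: "\<And>z. ((\<lambda>r. A r z) \<longlongrightarrow> 0) (at_right 0)"
    and li: "\<And>z. ((\<lambda>r. A r z) \<longlongrightarrow> 0) at_top"
  shows "J A' = 0"
proof -
  have "\<And>z. (LINT r:{0<..}|lborel. A' r z) = 0"
    by (rule ftc_half[where A="\<lambda>r. A r z" for z]) (auto intro: d good_cont_at[OF g] good_slice_int[OF g] l0 li)
  then show ?thesis by (simp add: J_def)
qed

lemma div_z:
  assumes d: "\<And>r z. 0 < r \<Longrightarrow> ((\<lambda>s. B r s) has_real_derivative B' r z) (at z)"
    and g: "good B'"
    and l0: "\<And>r. 0 < r \<Longrightarrow> ((\<lambda>z. B r z) \<longlongrightarrow> 0) at_bot"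
    and li: "\<And>r. 0 < r \<Longrightarrow> ((\<lambda>z. B r z) \<longlongrightarrow> 0) at_top"
  shows "J B' = 0"
proof -
  have int: "integrable (lborel \<Otimes>\<^sub>M lborel) (case_prod (H B'))" by (rule good_int[OF g])
  have "J B' = (LINT z|lborel. LINT r|lborel. H B' z r)"
    by (simp add: J_def set_lebesgue_integral_def H_def)
  also have "\<dots> = (LINT r|lborel. LINT z|lborel. H B' z r)"
    using lborel_pair.Fubini_integral[OF int] by simp
  also have "\<dots> = (LINT r|lborel. 0)"
  proof -
    have "(LINT z|lborel. H B' z r) = 0" for r

    proof (cases "0 < r")
      case True
      have "(LINT z|lborel. B' r z) = 0"
      proof (rule ftc_full[where B="\<lambda>z. B r z"])
        show "integrable lborel (B' r)"
        proof -
          obtain C where C: "\<forall>r>0. \<forall>z. \<bar>B' r z\<bar> \<le> C * hb r z" using g by (auto simp: good_def)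
          have "continuous_on UNIV (B' r)"
            using good_cont_at_z[OF g True] by (simp add: continuous_at_imp_continuous_on)
          then have m: "B' r \<in> borel_measurable lborel" by (simp add: borel_measurable_continuous_onI)
          have i: "integrable lborel (\<lambda>z. C * hb r z)"
            unfolding hb_def using integrable_inv_sq by (intro integrable_mult_right) simp
          show ?thesis
            by (rule Bochner_Integration.integrable_bound[OF i m])
               (use C True in \<open>auto intro!: AE_I2 intro: order_trans[OF _ abs_ge_self]\<close>)
        qed
      qed (use True d good_cont_at_z[OF g] l0 li in auto)
      then show ?thesis using True by (simp add: H_def)
    qed (simp add: H_def)
    then show ?thesis by simp
  qed
  finally show ?thesis by simp
qed


definition dec :: "(real \<Rightarrow> real \<Rightarrow> real) \<Rightarrow> bool" where
  "dec g \<longleftrightarrow> continuous_on UNIV (\<lambda>(r, z). g r z) \<and>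
     (\<forall>k::nat. \<exists>C. \<forall>r z. (1 + r\<^sup>2 + z\<^sup>2) ^ k * \<bar>g r z\<bar> \<le> C)"

lemma qpos: "0 < (1 + r\<^sup>2 + z\<^sup>2 :: real)"
  by (simp add: add_pos_nonneg)

lemma dec_bound: "dec g \<Longrightarrow> \<exists>C\<ge>0. \<forall>r z. (1 + r\<^sup>2 + z\<^sup>2) ^ k * \<bar>g r z\<bar> \<le> C"
proof -
  assume "dec g"
  then obtain C where C: "\<forall>r z. (1 + r\<^sup>2 + z\<^sup>2) ^ k * \<bar>g r z\<bar> \<le> C" unfolding dec_def by blast
  have "0 \<le> (1 + 0\<^sup>2 + 0\<^sup>2 :: real) ^ k * \<bar>g 0 0\<bar>" by simp
  then have "0 \<le> C" using C by (meson order_trans)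
  with C show ?thesis by blast
qed

lemma dec_add: "dec f \<Longrightarrow> dec g \<Longrightarrow> dec (\<lambda>r z. f r z + g r z)"
proof -
  assume f: "dec f" and g: "dec g"
  have c: "continuous_on UNIV (\<lambda>x. (\<lambda>(r, z). f r z) x + (\<lambda>(r, z). g r z) x)"
    using f g by (intro continuous_on_add) (auto simp: dec_def)
  have "\<exists>C. \<forall>r z. (1 + r\<^sup>2 + z\<^sup>2) ^ k * \<bar>f r z + g r z\<bar> \<le> C" for k
  proof -
    obtain C1 where C1: "\<forall>r z. (1 + r\<^sup>2 + z\<^sup>2) ^ k * \<bar>f r z\<bar> \<le> C1" using f unfolding dec_def by blast
    obtain C2 where C2: "\<forall>r z. (1 + r\<^sup>2 + z\<^sup>2) ^ k * \<bar>g r z\<bar> \<le> C2" using g unfolding dec_def by blast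
    have "(1 + r\<^sup>2 + z\<^sup>2) ^ k * \<bar>f r z + g r z\<bar> \<le> C1 + C2" for r z
    proof -
      have "(1 + r\<^sup>2 + z\<^sup>2) ^ k * \<bar>f r z + g r z\<bar> \<le> (1 + r\<^sup>2 + z\<^sup>2) ^ k * (\<bar>f r z\<bar> + \<bar>g r z\<bar>)"
        by (intro mult_left_mono abs_triangle_ineq) (simp add: add_nonneg_nonneg)
      also have "\<dots> \<le> C1 + C2" using C1 C2 by (simp add: distrib_left add_mono)
      finally show ?thesis .
    qed
    then show ?thesis by blast
  qed
  then show ?thesis using c by (auto simp: dec_def case_prod_unfold)
qed

lemma dec_mult: "dec f \<Longrightarrow> dec g \<Longrightarrow> dec (\<lambda>r z. f r z * g r z)"
proof -
  assume f: "dec f" and g: "dec g"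
  have c: "continuous_on UNIV (\<lambda>x. (\<lambda>(r, z). f r z) x * (\<lambda>(r, z). g r z) x)"
    using f g by (intro continuous_on_mult) (auto simp: dec_def)
  have "\<exists>C. \<forall>r z. (1 + r\<^sup>2 + z\<^sup>2) ^ k * \<bar>f r z * g r z\<bar> \<le> C" for k
  proof -
    obtain C1 where C1: "\<forall>r z. (1 + r\<^sup>2 + z\<^sup>2) ^ k * \<bar>f r z\<bar> \<le> C1" "C1 \<ge> 0" using dec_bound[OF f] by blast
    obtain C2 where C2: "\<forall>r z. (1 + r\<^sup>2 + z\<^sup>2) ^ 0 * \<bar>g r z\<bar> \<le> C2" "C2 \<ge> 0" using dec_bound[OF g] by blast
    have "(1 + r\<^sup>2 + z\<^sup>2) ^ k * \<bar>f r z * g r z\<bar> \<le> C1 * C2" for r z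
    proof -
      have "(1 + r\<^sup>2 + z\<^sup>2) ^ k * \<bar>f r z * g r z\<bar> = ((1 + r\<^sup>2 + z\<^sup>2) ^ k * \<bar>f r z\<bar>) * \<bar>g r z\<bar>"
        by (simp add: abs_mult)
      also have "\<dots> \<le> C1 * C2" using C1 C2 by (intro mult_mono) auto
      finally show ?thesis .
    qed
    then show ?thesis by blast
  qed
  then show ?thesis using c by (auto simp: dec_def case_prod_unfold)
qed


lemma dec_cmult: "dec f \<Longrightarrow> dec (\<lambda>r z. c * f r z)"
proof -
  assume f: "dec f"
  have cc: "continuous_on UNIV (\<lambda>x. c * (\<lambda>(r, z). f r z) x)"
    using f by (intro continuous_on_mult continuous_on_const) (auto simp: dec_def)
  have "\<exists>C. \<forall>r z. (1 + r\<^sup>2 + z\<^sup>2) ^ k * \<bar>c * f r z\<bar> \<le> C" for k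
  proof -
    obtain C1 where C1: "\<forall>r z. (1 + r\<^sup>2 + z\<^sup>2) ^ k * \<bar>f r z\<bar> \<le> C1" "C1 \<ge> 0" using dec_bound[OF f] by blast
    have "(1 + r\<^sup>2 + z\<^sup>2) ^ k * \<bar>c * f r z\<bar> \<le> \<bar>c\<bar> * C1" for r z
      using mult_left_mono[OF C1(1)[rule_format, of r z], of "\<bar>c\<bar>"] by (simp add: abs_mult ac_simps)
    then show ?thesis by blast
  qed
  then show ?thesis using cc by (auto simp: dec_def case_prod_unfold)
qed

lemma dec_diff: "dec f \<Longrightarrow> dec g \<Longrightarrow> dec (\<lambda>r z. f r z - g r z)"
  using dec_add[OF _ dec_cmult[of g "-1"], of f] by simp

lemma rp_bound:
  fixes r p z :: real
  assumes r: "0 < r" and p: "0 \<le> p" "p \<le> 8"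
  shows "r powr p \<le> (1 + r\<^sup>2 + z\<^sup>2) ^ 4"
proof -
  have "r powr p \<le> 1 + r ^ 8"
  proof (cases "r \<le> 1")
    case True
    then have "r powr p \<le> 1" using r p by (intro powr_le1) auto
    then show ?thesis by (simp add: add_increasing2 r less_imp_le)
  next
    case False
    then have "r powr p \<le> r powr 8" using p by (intro powr_mono) auto
    also have "\<dots> = r ^ 8" using r by (simp add: powr_realpow)
    finally show ?thesis by simp
  qed
  also have "\<dots> \<le> (1 + r\<^sup>2) ^ 4"
  proof -
    have "(1 + r\<^sup>2) ^ 4 = 1 + 4*r^2 + 6*r^4 + 4*r^6 + r^8" by (simp add: power2_eq_square power_def eval_nat_numeral algebra_simps)
    moreover have "0 \<le> 4*r^2 + 6*r^4 + 4*r^6" by simp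
    ultimately show ?thesis by linarith
  qed
  also have "\<dots> \<le> (1 + r\<^sup>2 + z\<^sup>2) ^ 4" by (intro power_mono) auto
  finally show ?thesis .
qed

lemma hb_ge: "inverse ((1 + r\<^sup>2 + z\<^sup>2) ^ 2) \<le> hb r z"
proof -
  have e: "(1 + r\<^sup>2 + z\<^sup>2) ^ 2 = (1 + r\<^sup>2) * (1 + z\<^sup>2) + (r\<^sup>2 + z\<^sup>2 + r\<^sup>2 * r\<^sup>2 + r\<^sup>2 * z\<^sup>2 + z\<^sup>2 * z\<^sup>2)"
    by (simp add: power2_eq_square algebra_simps)
  have "0 \<le> r\<^sup>2 + z\<^sup>2 + r\<^sup>2 * r\<^sup>2 + r\<^sup>2 * z\<^sup>2 + z\<^sup>2 * z\<^sup>2" by simp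
  then have "(1 + r\<^sup>2) * (1 + z\<^sup>2) \<le> (1 + r\<^sup>2 + z\<^sup>2) ^ 2" using e by linarith
  then have "inverse ((1 + r\<^sup>2 + z\<^sup>2) ^ 2) \<le> inverse ((1 + r\<^sup>2) * (1 + z\<^sup>2))"
    by (intro le_imp_inverse_le) (auto intro!: mult_pos_pos add_pos_nonneg)
  then show ?thesis by (simp add: hb_def)
qed

lemma aux_inv: "(Q::real) \<noteq> 0 \<Longrightarrow> a * b = (a * Q * b) * inverse Q"
  by (simp add: field_simps)

lemma dec_weight_bound:
  assumes g: "dec g" and p: "0 \<le> p" "p \<le> 8"
  shows "\<exists>C. \<forall>r>0. \<forall>z. \<bar>r powr p * g r z\<bar> \<le> C * hb r z"
proof -
  obtain C where C: "\<forall>r z. (1 + r\<^sup>2 + z\<^sup>2) ^ 6 * \<bar>g r z\<bar> \<le> C" "C \<ge> 0" using dec_bound[OF g] by blast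
  have "\<bar>r powr p * g r z\<bar> \<le> C * hb r z" if r: "0 < r" for r z
  proof -
    let ?q = "1 + r\<^sup>2 + z\<^sup>2"
    have q: "0 < ?q" by (rule qpos)
    have "\<bar>r powr p * g r z\<bar> = r powr p * \<bar>g r z\<bar>" using r by (simp add: abs_mult)
    also have "\<dots> \<le> ?q ^ 4 * \<bar>g r z\<bar>" using rp_bound[OF r p] by (intro mult_right_mono) auto
    also have "\<dots> = (?q ^ 4 * ?q ^ 2 * \<bar>g r z\<bar>) * inverse (?q ^ 2)"
      using q by (intro aux_inv) simp
    also have "\<dots> = (?q ^ 6 * \<bar>g r z\<bar>) * inverse (?q ^ 2)"
      by (simp flip: power_add)
    also have "\<dots> \<le> C * inverse (?q ^ 2)" using C q by (intro mult_right_mono) auto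
    also have "\<dots> \<le> C * hb r z" using C hb_ge by (intro mult_left_mono) auto
    finally show ?thesis .
  qed
  then show ?thesis by blast
qed

lemma good_w:
  assumes g: "dec g" and p: "0 \<le> p" "p \<le> 8"
  shows "good (\<lambda>r z. r powr p * g r z)"
proof -
  have cg: "continuous_on UNIV (\<lambda>(r, z). g r z)" using g by (simp add: dec_def)
  have "continuous_on ({0<..} \<times> UNIV) (\<lambda>x. fst x powr p * (\<lambda>(r, z). g r z) x)"
    by (intro continuous_on_mult continuous_on_subset[OF cg] continuous_intros) auto
  then show ?thesis using dec_weight_bound[OF assms] by (auto simp: good_def case_prod_unfold)
qed

lemma inv_sq_top: "((\<lambda>x::real. inverse (1 + x\<^sup>2)) \<longlongrightarrow> 0) at_top"
  by (intro tendsto_inverse_0_at_top filterlim_tendsto_add_at_top[OF tendsto_const]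
      filterlim_pow_at_top filterlim_ident) auto

lemma inv_sq_bot: "((\<lambda>x::real. inverse (1 + x\<^sup>2)) \<longlongrightarrow> 0) at_bot"
  by (intro tendsto_inverse_0_at_top filterlim_tendsto_add_at_top[OF tendsto_const]
      filterlim_pow_at_bot_even filterlim_ident) auto

lemma good_lim_r:
  assumes "good g" shows "((\<lambda>r. g r z) \<longlongrightarrow> 0) at_top"
proof -
  obtain C where C: "\<forall>r>0. \<forall>z. \<bar>g r z\<bar> \<le> C * hb r z" using assms by (auto simp: good_def)
  have l: "((\<lambda>r. C * hb r z) \<longlongrightarrow> 0) at_top"
    unfolding hb_def using tendsto_mult[OF tendsto_const[of C] tendsto_mult[OF inv_sq_top tendsto_const[of "inverse (1 + z\<^sup>2)"]]]
    by simp
  show ?thesis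
  proof (rule tendsto_sandwich[OF _ _ tendsto_minus[OF l, simplified] l])
    show "\<forall>\<^sub>F n in at_top. - (C * hb n z) \<le> g n z" using eventually_gt_at_top[of 0]
      by (rule eventually_mono) (use C in \<open>smt (verit)\<close>)
    show "\<forall>\<^sub>F n in at_top. g n z \<le> C * hb n z" using eventually_gt_at_top[of 0]
      by (rule eventually_mono) (use C in \<open>smt (verit)\<close>)
  qed
qed

lemma good_lim_z:
  assumes "good g" "0 < r" shows "((\<lambda>z. g r z) \<longlongrightarrow> 0) at_top" "((\<lambda>z. g r z) \<longlongrightarrow> 0) at_bot"
proof -
  obtain C where C: "\<forall>r>0. \<forall>z. \<bar>g r z\<bar> \<le> C * hb r z" using assms by (auto simp: good_def)
  have b: "- (C * hb r z) \<le> g r z \<and> g r z \<le> C * hb r z" for z using C assms(2) by (smt (verit))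
  have l: "((\<lambda>z. C * hb r z) \<longlongrightarrow> 0) at_top"
    unfolding hb_def using tendsto_mult[OF tendsto_const[of C] tendsto_mult[OF tendsto_const[of "inverse (1 + r\<^sup>2)"] inv_sq_top]]
    by simp
  show "((\<lambda>z. g r z) \<longlongrightarrow> 0) at_top"
    by (rule tendsto_sandwich[OF _ _ tendsto_minus[OF l, simplified] l]) (use b in auto)
  have l: "((\<lambda>z. C * hb r z) \<longlongrightarrow> 0) at_bot"
    unfolding hb_def using tendsto_mult[OF tendsto_const[of C] tendsto_mult[OF tendsto_const[of "inverse (1 + r\<^sup>2)"] inv_sq_bot]]
    by simp
  show "((\<lambda>z. g r z) \<longlongrightarrow> 0) at_bot"
    by (rule tendsto_sandwich[OF _ _ tendsto_minus[OF l, simplified] l]) (use b in auto)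
qed

lemma dec_lim_r0:
  assumes g: "dec g" and p: "0 < p"
  shows "((\<lambda>r. r powr p * g r z) \<longlongrightarrow> 0) (at_right 0)"
proof -
  obtain C where C: "\<forall>r z. (1 + r\<^sup>2 + z\<^sup>2) ^ 0 * \<bar>g r z\<bar> \<le> C" "C \<ge> 0" using dec_bound[OF g] by blast
  have l0: "((\<lambda>r::real. r powr p) \<longlongrightarrow> 0) (at_right 0)"
    by (rule tendsto_zero_powrI[OF _ tendsto_const]) (auto simp: p eventually_at_right_less intro!: tendsto_ident_at
       eventually_at_rightI[of 0 1])
  have l: "((\<lambda>r. C * r powr p) \<longlongrightarrow> 0) (at_right 0)" using tendsto_mult[OF tendsto_const[of C] l0] by simp
  have e: "\<forall>\<^sub>F r in at_right 0. \<bar>r powr p * g r z\<bar> \<le> C * r powr p"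
    using eventually_at_right_less[of 0] 
  proof (rule eventually_mono)
    fix r :: real assume r: "0 < r"
    have "\<bar>r powr p * g r z\<bar> = r powr p * \<bar>g r z\<bar>" using r by (simp add: abs_mult)
    also have "\<dots> \<le> r powr p * C" using C by (intro mult_left_mono) auto
    finally show "\<bar>r powr p * g r z\<bar> \<le> C * r powr p" by (simp add: ac_simps)
  qed
  show ?thesis
    by (rule tendsto_sandwich[OF _ _ tendsto_minus[OF l, simplified] l])
       (use e in \<open>auto elim!: eventually_mono simp: abs_le_iff\<close>)
qed


definition et :: "real \<times> real \<times> real" where "et = (1, 0, 0)"
definition er :: "real \<times> real \<times> real" where "er = (0, 1, 0)"
definition ez :: "real \<times> real \<times> real" where "ez = (0, 0, 1)"

lemma Basis3: "et \<in> Basis" "er \<in> Basis" "ez \<in> Basis"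
  by (auto simp: et_def er_def ez_def Basis_prod_def zero_prod_def)

definition uc :: "(real \<Rightarrow> real \<Rightarrow> real \<Rightarrow> real) \<Rightarrow> real \<times> real \<times> real \<Rightarrow> real" where
  "uc f = (\<lambda>(t, r, z). f t r z)"
definition cu :: "(real \<times> real \<times> real \<Rightarrow> real) \<Rightarrow> real \<Rightarrow> real \<Rightarrow> real \<Rightarrow> real" where
  "cu G = (\<lambda>t r z. G (t, r, z))"

lemma uc_cu[simp]: "uc (cu G) = G" by (auto simp: uc_def cu_def fun_eq_iff)
lemma cu_uc[simp]: "cu (uc f) = f" by (auto simp: uc_def cu_def fun_eq_iff)

lemma deriv_shift': "deriv f x = deriv (\<lambda>h. f (x + h)) 0"
  using deriv_shift_0[of f x] by (simp add: o_def)

lemma dr_pd: "dr f = cu (pd er (uc f))"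
  unfolding fun_eq_iff dr_def cu_def pd_def uc_def er_def
  by (intro allI, subst deriv_shift') simp
lemma dz_pd: "dz f = cu (pd ez (uc f))"
  unfolding fun_eq_iff dz_def cu_def pd_def uc_def ez_def
  by (intro allI, subst deriv_shift') simp
lemma dt_pd: "dt f = cu (pd et (uc f))"
  unfolding fun_eq_iff dt_def cu_def pd_def uc_def et_def
  by (intro allI, subst deriv_shift') simp

lemma iter_pd_append: "iter_pd vs (pd v G) = iter_pd (vs @ [v]) G"
  by (induction vs) auto

definition SS :: "real \<Rightarrow> (real \<times> real \<times> real) set" where
  "SS T = {0<..<T} \<times> UNIV \<times> UNIV"

lemma open_SS: "open (SS T)"
  unfolding SS_def by (intro open_Times) auto

definition SM :: "real \<Rightarrow> (real \<times> real \<times> real \<Rightarrow> real) \<Rightarrow> bool" where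
  "SM T G \<longleftrightarrow> smooth_on (SS T) G \<and> rapid_decay T G"

lemma SM_pd: "SM T G \<Longrightarrow> v \<in> Basis \<Longrightarrow> SM T (pd v G)"
proof -
  assume G: "SM T G" and v: "v \<in> Basis"
  have sm: "smooth_on (SS T) G" and rd: "rapid_decay T G" using G by (auto simp: SM_def)
  have "smooth_on (SS T) (pd v G)"
    unfolding smooth_on_def
  proof (intro allI impI)
    fix vs :: "(real \<times> real \<times> real) list" assume vs: "set vs \<subseteq> Basis"
    then have "set (vs @ [v]) \<subseteq> Basis" using v by auto
    from sm[unfolded smooth_on_def, rule_format, OF this]
    show "continuous_on (SS T) (iter_pd vs (pd v G)) \<and>
        (\<forall>w\<in>Basis. \<forall>x\<in>SS T. ((\<lambda>h. iter_pd vs (pd v G) (x + h *\<^sub>R w)) has_real_derivative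
           iter_pd (w # vs) (pd v G) x) (at 0))"
      by (simp add: iter_pd_append)
  qed
  moreover have "rapid_decay T (pd v G)"
    unfolding rapid_decay_def
  proof (intro allI impI)
    fix a b :: real and vs :: "(real \<times> real \<times> real) list" and k :: nat
    assume h: "0 < a \<and> a \<le> b \<and> b < T \<and> set vs \<subseteq> Basis"
    then have "0 < a \<and> a \<le> b \<and> b < T \<and> set (vs @ [v]) \<subseteq> Basis" using v by auto
    from rd[unfolded rapid_decay_def, rule_format, OF this, of k]
    show "\<exists>C. \<forall>t\<in>{a..b}. \<forall>r z. (1 + r\<^sup>2 + z\<^sup>2) ^ k * \<bar>iter_pd vs (pd v G) (t, r, z)\<bar> \<le> C"
      by (simp add: iter_pd_append)
  qed
  ultimately show ?thesis by (simp add: SM_def)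
qed

lemma SM_cont: "SM T G \<Longrightarrow> continuous_on (SS T) G"
  unfolding SM_def smooth_on_def by (drule conjunct1, drule spec[of _ "[]"]) simp

lemma SM_der: "SM T G \<Longrightarrow> v \<in> Basis \<Longrightarrow> x \<in> SS T \<Longrightarrow>
    ((\<lambda>h. G (x + h *\<^sub>R v)) has_real_derivative pd v G x) (at 0)"
  unfolding SM_def smooth_on_def by (drule conjunct1, drule spec[of _ "[]"]) simp

lemma SM_dec: "SM T G \<Longrightarrow> 0 < t \<Longrightarrow> t < T \<Longrightarrow> dec (\<lambda>r z. G (t, r, z))"
proof -
  assume G: "SM T G" and t: "0 < t" "t < T"
  have c: "continuous_on (SS T) G" by (rule SM_cont[OF G])
  have "continuous_on UNIV (\<lambda>x. G ((\<lambda>(r, z). (t, r, z)) x))"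
    by (rule continuous_on_compose2[OF c]) (auto intro!: continuous_intros simp: case_prod_unfold SS_def t)
  moreover have "\<exists>C. \<forall>r z. (1 + r\<^sup>2 + z\<^sup>2) ^ k * \<bar>G (t, r, z)\<bar> \<le> C" for k
  proof -
    have "rapid_decay T G" using G by (simp add: SM_def)
    then have "\<exists>C. \<forall>s\<in>{t..t}. \<forall>r z. (1 + r\<^sup>2 + z\<^sup>2) ^ k * \<bar>iter_pd [] G (s, r, z)\<bar> \<le> C"
      unfolding rapid_decay_def using t by (drule_tac x=t in spec, drule_tac x=t in spec, drule_tac x="[]" in spec) simp
    then show ?thesis by auto
  qed
  ultimately show ?thesis by (auto simp: dec_def case_prod_unfold)
qed

lemma SM_dR: "SM T G \<Longrightarrow> 0 < t \<Longrightarrow> t < T \<Longrightarrow>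
    ((\<lambda>s. G (t, s, z)) has_real_derivative pd er G (t, r, z)) (at r)"
proof -
  assume G: "SM T G" and t: "0 < t" "t < T"
  have "((\<lambda>h. G ((t, r, z) + h *\<^sub>R er)) has_real_derivative pd er G (t, r, z)) (at 0)"
    by (rule SM_der[OF G Basis3(2)]) (simp add: SS_def t)
  then have "((\<lambda>h. G (t, h + r, z)) has_real_derivative pd er G (t, r, z)) (at 0)"
    by (simp add: er_def add.commute)
  then show ?thesis using DERIV_shift[of "\<lambda>s. G (t, s, z)" _ 0 r] by simp
qed

lemma SM_dZ: "SM T G \<Longrightarrow> 0 < t \<Longrightarrow> t < T \<Longrightarrow>
    ((\<lambda>s. G (t, r, s)) has_real_derivative pd ez G (t, r, z)) (at z)"
proof -
  assume G: "SM T G" and t: "0 < t" "t < T"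
  have "((\<lambda>h. G ((t, r, z) + h *\<^sub>R ez)) has_real_derivative pd ez G (t, r, z)) (at 0)"
    by (rule SM_der[OF G Basis3(3)]) (simp add: SS_def t)
  then have "((\<lambda>h. G (t, r, h + z)) has_real_derivative pd ez G (t, r, z)) (at 0)"
    by (simp add: ez_def add.commute)
  then show ?thesis using DERIV_shift[of "\<lambda>s. G (t, r, s)" _ 0 z] by simp
qed

lemma SM_dT: "SM T G \<Longrightarrow> 0 < t \<Longrightarrow> t < T \<Longrightarrow>
    ((\<lambda>s. G (s, r, z)) has_real_derivative pd et G (t, r, z)) (at t)"
proof -
  assume G: "SM T G" and t: "0 < t" "t < T"
  have "((\<lambda>h. G ((t, r, z) + h *\<^sub>R et)) has_real_derivative pd et G (t, r, z)) (at 0)"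
    by (rule SM_der[OF G Basis3(1)]) (simp add: SS_def t)
  then have "((\<lambda>h. G (h + t, r, z)) has_real_derivative pd et G (t, r, z)) (at 0)"
    by (simp add: et_def add.commute)
  then show ?thesis using DERIV_shift[of "\<lambda>s. G (s, r, z)" _ 0 t] by simp
qed


lemma line_der:
  fixes F :: "'a::real_normed_vector \<Rightarrow> real"
  assumes d: "\<forall>q\<in>S. ((\<lambda>h. F (q + h *\<^sub>R v)) has_real_derivative F' q) (at 0)"
    and q: "a + x *\<^sub>R v \<in> S"
  shows "((\<lambda>s. F (a + s *\<^sub>R v)) has_real_derivative F' (a + x *\<^sub>R v)) (at x)"
proof -
  have "((\<lambda>h. F (a + x *\<^sub>R v + h *\<^sub>R v)) has_real_derivative F' (a + x *\<^sub>R v)) (at 0)"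
    using d q by blast
  then have "((\<lambda>s. F (a + (s + x) *\<^sub>R v)) has_real_derivative F' (a + x *\<^sub>R v)) (at 0)"
    by (simp add: scaleR_add_left algebra_simps)
  then show ?thesis using DERIV_shift[of "\<lambda>s. F (a + s *\<^sub>R v)" _ 0 x] by simp
qed

lemma sch_aux:
  fixes G :: "'a::real_normed_vector \<Rightarrow> real"
  assumes Gv: "\<forall>q\<in>S. ((\<lambda>h. G (q + h *\<^sub>R v)) has_real_derivative Gv q) (at 0)"
    and Gvw: "\<forall>q\<in>S. ((\<lambda>h. Gv (q + h *\<^sub>R w)) has_real_derivative Gvw q) (at 0)"
    and h: "0 < h" and inS: "\<And>x y. 0 \<le> x \<Longrightarrow> x \<le> h \<Longrightarrow> 0 \<le> y \<Longrightarrow> y \<le> h \<Longrightarrow> p + x *\<^sub>R v + y *\<^sub>R w \<in> S"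
  shows "\<exists>x y. 0 < x \<and> x < h \<and> 0 < y \<and> y < h \<and>
     G (p + h *\<^sub>R v + h *\<^sub>R w) - G (p + h *\<^sub>R v) - G (p + h *\<^sub>R w) + G p = h * h * Gvw (p + x *\<^sub>R v + y *\<^sub>R w)"
proof -
  define g where "g x = G (p + h *\<^sub>R w + x *\<^sub>R v) - G (p + x *\<^sub>R v)" for x
  have "DERIV g x :> Gv (p + h *\<^sub>R w + x *\<^sub>R v) - Gv (p + x *\<^sub>R v)" if "0 \<le> x" "x \<le> h" for x
    unfolding g_def
  proof (intro DERIV_diff)
    show "((\<lambda>s. G (p + h *\<^sub>R w + s *\<^sub>R v)) has_real_derivative Gv (p + h *\<^sub>R w + x *\<^sub>R v)) (at x)"
      by (rule line_der[OF Gv]) (use inS[of x h] that h in \<open>simp add: algebra_simps\<close>)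
    show "((\<lambda>s. G (p + s *\<^sub>R v)) has_real_derivative Gv (p + x *\<^sub>R v)) (at x)"
      by (rule line_der[OF Gv]) (use inS[of x 0] that h in \<open>simp add: algebra_simps\<close>)
  qed
  from MVT2[OF h this] obtain x where x: "0 < x" "x < h"
    and gx: "g h - g 0 = (h - 0) * (Gv (p + h *\<^sub>R w + x *\<^sub>R v) - Gv (p + x *\<^sub>R v))" by blast
  define k where "k y = Gv (p + x *\<^sub>R v + y *\<^sub>R w)" for y
  have "DERIV k y :> Gvw (p + x *\<^sub>R v + y *\<^sub>R w)" if "0 \<le> y" "y \<le> h" for y
    unfolding k_def by (rule line_der[OF Gvw]) (use inS[of x y] that x in auto)
  from MVT2[OF h this] obtain y where y: "0 < y" "y < h"
    and ky: "k h - k 0 = (h - 0) * Gvw (p + x *\<^sub>R v + y *\<^sub>R w)" by blast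
  have "G (p + h *\<^sub>R v + h *\<^sub>R w) - G (p + h *\<^sub>R v) - G (p + h *\<^sub>R w) + G p = g h - g 0"
    by (simp add: g_def algebra_simps)
  also have "\<dots> = h * (k h - k 0)" using gx by (simp add: k_def algebra_simps)
  also have "\<dots> = h * h * Gvw (p + x *\<^sub>R v + y *\<^sub>R w)" using ky by simp
  finally show ?thesis using x y by blast
qed

lemma schwarz:
  fixes G :: "'a::real_normed_vector \<Rightarrow> real"
  assumes S: "open S" "p \<in> S"
    and Gv: "\<forall>q\<in>S. ((\<lambda>h. G (q + h *\<^sub>R v)) has_real_derivative Gv q) (at 0)"
    and Gw: "\<forall>q\<in>S. ((\<lambda>h. G (q + h *\<^sub>R w)) has_real_derivative Gw q) (at 0)"
    and Gvw: "\<forall>q\<in>S. ((\<lambda>h. Gv (q + h *\<^sub>R w)) has_real_derivative Gvw q) (at 0)"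
    and Gwv: "\<forall>q\<in>S. ((\<lambda>h. Gw (q + h *\<^sub>R v)) has_real_derivative Gwv q) (at 0)"
    and c1: "continuous_on S Gvw" and c2: "continuous_on S Gwv"
  shows "Gvw p = Gwv p"
proof (rule ccontr)
  assume ne: "Gvw p \<noteq> Gwv p"
  define e where "e = \<bar>Gvw p - Gwv p\<bar> / 2"
  have e: "0 < e" using ne by (simp add: e_def)
  obtain d0 where d0: "0 < d0" "ball p d0 \<subseteq> S" using S openE by blast
  obtain d1 where d1: "0 < d1" "\<forall>q\<in>S. dist q p < d1 \<longrightarrow> dist (Gvw q) (Gvw p) < e"
    using c1 S(2) e unfolding continuous_on_iff by blast
  obtain d2 where d2: "0 < d2" "\<forall>q\<in>S. dist q p < d2 \<longrightarrow> dist (Gwv q) (Gwv p) < e"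
    using c2 S(2) e unfolding continuous_on_iff by blast
  define d where "d = min d0 (min d1 d2)"
  have d: "0 < d" using d0 d1 d2 by (simp add: d_def)
  define h where "h = d / (2 * (norm v + norm w + 1))"
  have hpos: "0 < h" using d by (simp add: h_def add_nonneg_pos)
  have close: "dist (p + x *\<^sub>R v + y *\<^sub>R w) p < d" if "0 \<le> x" "x \<le> h" "0 \<le> y" "y \<le> h" for x y
  proof -
    have "dist (p + x *\<^sub>R v + y *\<^sub>R w) p = norm (x *\<^sub>R v + y *\<^sub>R w)" by (simp add: dist_norm)
    also have "\<dots> \<le> x * norm v + y * norm w"
      using that by (metis abs_of_nonneg norm_scaleR norm_triangle_ineq)
    also have "\<dots> \<le> h * norm v + h * norm w" using that by (intro add_mono mult_right_mono) auto
    also have "\<dots> < h * (2 * (norm v + norm w + 1))"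
    proof -
      have "h * (2 * (norm v + norm w + 1)) = 2*(h*norm v) + 2*(h*norm w) + 2*h" by (simp add: algebra_simps)
      moreover have "0 \<le> h * norm v" "0 \<le> h * norm w" using hpos by simp_all
      ultimately show ?thesis using hpos by linarith
    qed
    also have "\<dots> = d"
    proof -
      have "2 * norm v + 2 * norm w + 2 \<noteq> 0" using norm_ge_zero[of v] norm_ge_zero[of w] by linarith
      then show ?thesis by (simp add: h_def)
    qed
    finally show ?thesis .
  qed
  have inS: "p + x *\<^sub>R v + y *\<^sub>R w \<in> S" if "0 \<le> x" "x \<le> h" "0 \<le> y" "y \<le> h" for x y
    using close[OF that] d0 by (auto simp: d_def dist_commute)
  have inS': "p + x *\<^sub>R w + y *\<^sub>R v \<in> S" if "0 \<le> x" "x \<le> h" "0 \<le> y" "y \<le> h" for x y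
    using inS[of y x] that by (simp add: algebra_simps)
  obtain x y where xy: "0 < x" "x < h" "0 < y" "y < h"
    and D1: "G (p + h *\<^sub>R v + h *\<^sub>R w) - G (p + h *\<^sub>R v) - G (p + h *\<^sub>R w) + G p = h * h * Gvw (p + x *\<^sub>R v + y *\<^sub>R w)"
    using sch_aux[OF Gv Gvw hpos inS] by blast
  obtain x' y' where xy': "0 < x'" "x' < h" "0 < y'" "y' < h"
    and D2: "G (p + h *\<^sub>R w + h *\<^sub>R v) - G (p + h *\<^sub>R w) - G (p + h *\<^sub>R v) + G p = h * h * Gwv (p + x' *\<^sub>R w + y' *\<^sub>R v)"
    using sch_aux[OF Gw Gwv hpos inS'] by blast
  have eq: "Gvw (p + x *\<^sub>R v + y *\<^sub>R w) = Gwv (p + x' *\<^sub>R w + y' *\<^sub>R v)"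
    using D1 D2 hpos by (simp add: algebra_simps)
  have q1: "dist (Gvw (p + x *\<^sub>R v + y *\<^sub>R w)) (Gvw p) < e"
    using d1(2) inS[of x y] close[of x y] xy by (auto simp: d_def)
  have q2: "dist (Gwv (p + x' *\<^sub>R w + y' *\<^sub>R v)) (Gwv p) < e"
    using d2(2) inS[of y' x'] close[of y' x'] xy' by (auto simp: d_def algebra_simps)
  have "\<bar>Gvw p - Gwv p\<bar> < 2 * e" using q1 q2 eq by (simp add: dist_real_def)
  then show False by (simp add: e_def)
qed


lemma SM_comm:
  assumes G: "SM T G" and v: "v \<in> Basis" and w: "w \<in> Basis" and x: "x \<in> SS T"
  shows "pd w (pd v G) x = pd v (pd w G) x"
proof (rule schwarz[OF open_SS x])
  show "\<forall>q\<in>SS T. ((\<lambda>h. G (q + h *\<^sub>R v)) has_real_derivative pd v G q) (at 0)"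
    using SM_der[OF G v] by blast
  show "\<forall>q\<in>SS T. ((\<lambda>h. G (q + h *\<^sub>R w)) has_real_derivative pd w G q) (at 0)"
    using SM_der[OF G w] by blast
  show "\<forall>q\<in>SS T. ((\<lambda>h. pd v G (q + h *\<^sub>R w)) has_real_derivative pd w (pd v G) q) (at 0)"
    using SM_der[OF SM_pd[OF G v] w] by blast
  show "\<forall>q\<in>SS T. ((\<lambda>h. pd w G (q + h *\<^sub>R v)) has_real_derivative pd v (pd w G) q) (at 0)"
    using SM_der[OF SM_pd[OF G w] v] by blast
  show "continuous_on (SS T) (pd w (pd v G))" by (rule SM_cont[OF SM_pd[OF SM_pd[OF G v] w]])
  show "continuous_on (SS T) (pd v (pd w G))" by (rule SM_cont[OF SM_pd[OF SM_pd[OF G w] v]])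
qed

lemma pd_line_cong: "(\<And>h. G1 (x + h *\<^sub>R v) = G2 (x + h *\<^sub>R v)) \<Longrightarrow> pd v G1 x = pd v G2 x"
  unfolding pd_def by presburger

lemma SS_line: "x \<in> SS T \<Longrightarrow> v \<in> {er, ez} \<Longrightarrow> x + h *\<^sub>R v \<in> SS T"
  by (auto simp: SS_def er_def ez_def)

lemma pd_cong_SS:
  assumes e: "\<And>y. y \<in> SS T \<Longrightarrow> G1 y = G2 y" and x: "x \<in> SS T" and v: "v \<in> {er, ez}"
  shows "pd v G1 x = pd v G2 x"
proof (rule pd_line_cong)
  fix h show "G1 (x + h *\<^sub>R v) = G2 (x + h *\<^sub>R v)" using e SS_line[OF x v] by blast
qed

lemma mvt_abs:
  fixes g g' :: "real \<Rightarrow> real"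
  assumes d: "\<And>t. a < t \<Longrightarrow> t < b \<Longrightarrow> (g has_real_derivative g' t) (at t)"
    and B: "\<And>t. a < t \<Longrightarrow> t < b \<Longrightarrow> \<bar>g' t\<bar> \<le> B"
    and x: "a < x" "x < b" and y: "a < y" "y < b"
  shows "\<bar>g x - g y\<bar> \<le> B * \<bar>x - y\<bar>"
proof -
  have main: "\<bar>g q - g p\<bar> \<le> B * (q - p)" if "a < p" "p < q" "q < b" for p q
  proof -
    have dd: "\<And>x. p \<le> x \<Longrightarrow> x \<le> q \<Longrightarrow> (g has_real_derivative g' x) (at x)"
      using that by (intro d) auto
    obtain z where z: "p < z" "z < q" "g q - g p = (q - p) * g' z"
      using MVT2[OF \<open>p < q\<close> dd] by blast
    have "\<bar>g q - g p\<bar> = (q - p) * \<bar>g' z\<bar>" using z that by (simp add: abs_mult)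
    also have "\<dots> \<le> (q - p) * B" using B[of z] z that by (intro mult_left_mono) auto
    finally show ?thesis by (simp add: ac_simps)
  qed
  show ?thesis
  proof (cases x y rule: linorder_cases)
    case less then show ?thesis using main[of x y] x y by (simp add: abs_minus_commute)
  next
    case greater then show ?thesis using main[of y x] x y by simp
  qed simp
qed

lemma dui:
  fixes f f' :: "real \<Rightarrow> 'a \<Rightarrow> real" and h :: "'a \<Rightarrow> real"
  assumes ab: "a < t0" "t0 < b"
    and int: "\<And>\<tau>. a < \<tau> \<Longrightarrow> \<tau> < b \<Longrightarrow> integrable M (f \<tau>)"
    and der: "\<And>\<tau> x. a < \<tau> \<Longrightarrow> \<tau> < b \<Longrightarrow> x \<in> space M \<Longrightarrow> ((\<lambda>s. f s x) has_real_derivative f' \<tau> x) (at \<tau>)"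
    and meas: "f' t0 \<in> borel_measurable M"
    and hint: "integrable M h"
    and bnd: "\<And>\<tau> x. a < \<tau> \<Longrightarrow> \<tau> < b \<Longrightarrow> x \<in> space M \<Longrightarrow> \<bar>f' \<tau> x\<bar> \<le> h x"
  shows "((\<lambda>\<tau>. integral\<^sup>L M (f \<tau>)) has_real_derivative integral\<^sup>L M (f' t0)) (at t0)"
  unfolding has_field_derivative_iff tendsto_at_iff_sequentially
proof (intro allI impI)
  fix X :: "nat \<Rightarrow> real"
  assume X: "\<forall>i. X i \<in> UNIV - {t0}" and lim: "X \<longlonglongrightarrow> t0"
  define s where "s i x = (if a < X i \<and> X i < b then (f (X i) x - f t0 x) / (X i - t0) else 0)" for i x
  have ev: "eventually (\<lambda>i. a < X i \<and> X i < b) sequentially"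
  proof -
    have "eventually (\<lambda>i. X i \<in> {a<..<b}) sequentially"
      using lim ab by (intro topological_tendstoD) auto
    then show ?thesis by simp
  qed
  have sm: "s i \<in> borel_measurable M" for i
  proof (cases "a < X i \<and> X i < b")
    case True
    then have m1: "f (X i) \<in> borel_measurable M" and m2: "f t0 \<in> borel_measurable M"
      using int ab by (auto intro: borel_measurable_integrable)
    have "(\<lambda>x. (f (X i) x - f t0 x) / (X i - t0)) \<in> borel_measurable M"
      using m1 m2 by measurable
    moreover have "s i = (\<lambda>x. (f (X i) x - f t0 x) / (X i - t0))" using True by (simp add: s_def fun_eq_iff)
    ultimately show ?thesis by simp
  next
    case False
    then have "s i = (\<lambda>x. 0)" unfolding s_def by (intro ext) (simp only: if_False)
    then show ?thesis by simp
  qed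
  have sb: "AE x in M. norm (s i x) \<le> h x" for i
  proof (intro AE_I2)
    fix x assume x: "x \<in> space M"
    have h0: "0 \<le> h x" using bnd[OF ab x] by (meson abs_ge_zero order_trans)
    show "norm (s i x) \<le> h x"
    proof (cases "a < X i \<and> X i < b")
      case True
      have ne: "X i \<noteq> t0" using X by auto
      have "\<bar>f (X i) x - f t0 x\<bar> \<le> h x * \<bar>X i - t0\<bar>"
        by (rule mvt_abs[where a=a and b=b]) (use der x bnd True ab in auto)
      then show ?thesis using True ne by (simp add: s_def abs_divide pos_divide_le_eq)
    next
      case False
      show ?thesis unfolding s_def if_not_P[OF False] using h0 by simp
    qed
  qed
  have sl: "AE x in M. (\<lambda>i. s i x) \<longlonglongrightarrow> f' t0 x"
  proof (intro AE_I2)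
    fix x assume x: "x \<in> space M"
    have "((\<lambda>y. (f y x - f t0 x) / (y - t0)) \<longlongrightarrow> f' t0 x) (at t0)"
      using der[OF ab x] by (simp add: has_field_derivative_iff)
    then have "((\<lambda>y. (f y x - f t0 x) / (y - t0)) \<circ> X) \<longlonglongrightarrow> f' t0 x"
      using X lim unfolding tendsto_at_iff_sequentially by blast
    then show "(\<lambda>i. s i x) \<longlonglongrightarrow> f' t0 x"
      by (rule Lim_transform_eventually) (use ev in \<open>auto elim!: eventually_mono simp: s_def\<close>)
  qed
  have L: "(\<lambda>i. integral\<^sup>L M (s i)) \<longlonglongrightarrow> integral\<^sup>L M (f' t0)"
    by (rule integral_dominated_convergence[OF meas sm hint sl sb])
  show "((\<lambda>y. (integral\<^sup>L M (f y) - integral\<^sup>L M (f t0)) / (y - t0)) \<circ> X) \<longlonglongrightarrow> integral\<^sup>L M (f' t0)"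
  proof (rule Lim_transform_eventually[OF L])
    show "\<forall>\<^sub>F i in sequentially. integral\<^sup>L M (s i) = ((\<lambda>y. (integral\<^sup>L M (f y) - integral\<^sup>L M (f t0)) / (y - t0)) \<circ> X) i"
      using ev
    proof (rule eventually_mono)
      fix i assume i: "a < X i \<and> X i < b"
      have "s i = (\<lambda>x. (f (X i) x - f t0 x) / (X i - t0))" using i by (simp add: s_def fun_eq_iff)
      then have "integral\<^sup>L M (s i) = (LINT x|M. (f (X i) x - f t0 x) / (X i - t0))"
        by simp
      also have "\<dots> = (integral\<^sup>L M (f (X i)) - integral\<^sup>L M (f t0)) / (X i - t0)"
        using int[of "X i"] int[of t0] i ab by simp
      finally show "integral\<^sup>L M (s i) = ((\<lambda>y. (integral\<^sup>L M (f y) - integral\<^sup>L M (f t0)) / (y - t0)) \<circ> X) i"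
        by simp
    qed
  qed
qed


lemma good_hbC: "good (\<lambda>r z. C * hb r z)"
proof -
  have "continuous_on ({0<..} \<times> UNIV) (\<lambda>x. C * (inverse (1 + (fst x)\<^sup>2) * inverse (1 + (snd x)\<^sup>2)))"
    by (intro continuous_intros) (auto, (smt (verit) zero_le_power2)+)
  moreover have "\<forall>r>0. \<forall>z. \<bar>C * hb r z\<bar> \<le> \<bar>C\<bar> * hb r z"
    using hb_pos by (simp add: abs_mult less_imp_le)
  ultimately show ?thesis unfolding good_def hb_def by (auto simp: case_prod_unfold)
qed

lemma J_deriv:
  assumes ab: "a < t0" "t0 < b"
    and ge: "\<And>\<tau>. a < \<tau> \<Longrightarrow> \<tau> < b \<Longrightarrow> good (e \<tau>)"
    and der: "\<And>\<tau> r z. a < \<tau> \<Longrightarrow> \<tau> < b \<Longrightarrow> 0 < r \<Longrightarrow> ((\<lambda>s. e s r z) has_real_derivative e' \<tau> r z) (at \<tau>)"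
    and g': "good (e' t0)"
    and bnd: "\<And>\<tau> r z. a < \<tau> \<Longrightarrow> \<tau> < b \<Longrightarrow> 0 < r \<Longrightarrow> \<bar>e' \<tau> r z\<bar> \<le> C * hb r z"
  shows "((\<lambda>\<tau>. J (e \<tau>)) has_real_derivative J (e' t0)) (at t0)"
proof -
  let ?M = "lborel \<Otimes>\<^sub>M lborel :: (real \<times> real) measure"
  have "((\<lambda>\<tau>. integral\<^sup>L ?M (case_prod (H (e \<tau>)))) has_real_derivative integral\<^sup>L ?M (case_prod (H (e' t0)))) (at t0)"
  proof (rule dui[where a=a and b=b and h="case_prod (H (\<lambda>r z. C * hb r z))"])
    show "integrable ?M (case_prod (H (e \<tau>)))" if "a < \<tau>" "\<tau> < b" for \<tau>
      by (rule good_int[OF ge[OF that]])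
    show "((\<lambda>s. case_prod (H (e s)) x) has_real_derivative case_prod (H (e' \<tau>)) x) (at \<tau>)"
      if "a < \<tau>" "\<tau> < b" "x \<in> space ?M" for \<tau> x
    proof (cases "0 < snd x")
      case True
      then show ?thesis using der[OF that(1,2) True, of "fst x"]
        by (simp add: H_def case_prod_unfold)
    next
      case False
      then show ?thesis by (simp add: H_def case_prod_unfold)
    qed
    show "case_prod (H (e' t0)) \<in> borel_measurable ?M" by (rule good_meas[OF g'])
    show "integrable ?M (case_prod (H (\<lambda>r z. C * hb r z)))" by (rule good_int[OF good_hbC])
    show "\<bar>case_prod (H (e' \<tau>)) x\<bar> \<le> case_prod (H (\<lambda>r z. C * hb r z)) x"
      if "a < \<tau>" "\<tau> < b" "x \<in> space ?M" for \<tau> x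
      using bnd[OF that(1,2)] by (auto simp: H_def case_prod_unfold indicator_def)
  qed (use ab in auto)
  then show ?thesis unfolding J_prod[OF g']
  proof (rule has_field_derivative_transform_within_open[where S="{a<..<b}"])
    show "t0 \<in> {a<..<b}" using ab by auto
    show "integral\<^sup>L ?M (case_prod (H (e \<tau>))) = J (e \<tau>)" if "\<tau> \<in> {a<..<b}" for \<tau>
      using J_prod[OF ge] that by auto
  qed auto
qed

lemma div_zero:
  assumes dA: "dec a" and pA: "0 < pA" "pA \<le> 8" and dB: "dec b" and pB: "0 \<le> pB" "pB \<le> 8"
    and gA: "good A'" and gB: "good B'"
    and derA: "\<And>r z. 0 < r \<Longrightarrow> ((\<lambda>s. s powr pA * a s z) has_real_derivative A' r z) (at r)"
    and derB: "\<And>r z. 0 < r \<Longrightarrow> ((\<lambda>s. r powr pB * b r s) has_real_derivative B' r z) (at z)"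
    and eq: "\<And>r z. 0 < r \<Longrightarrow> Z r z = A' r z + B' r z"
  shows "J Z = 0"
proof -
  have "J Z = J (\<lambda>r z. A' r z + B' r z)" by (rule J_cong) (simp add: eq)
  also have "\<dots> = J A' + J B'" by (rule J_add[OF gA gB])
  also have "J A' = 0"
    by (rule div_r[OF derA gA dec_lim_r0[OF dA pA(1)] good_lim_r[OF good_w[OF dA _ pA(2)]]])
       (use pA in auto)
  also have "J B' = 0"
    by (rule div_z[OF derB gB good_lim_z(2)[OF good_w[OF dB pB]] good_lim_z(1)[OF good_w[OF dB pB]]])
  finally show ?thesis by simp
qed

lemma green:
  fixes n :: real
  assumes F: "SM T F" and G: "SM T G" and t: "0 < t" "t < T" and n: "2 \<le> n" "n \<le> 7"
  shows "J (\<lambda>r z. r powr n * F (t, r, z) * (pd er (pd er G) (t, r, z) + n / r * pd er G (t, r, z) + pd ez (pd ez G) (t, r, z)))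
       = - J (\<lambda>r z. r powr n * (pd er F (t, r, z) * pd er G (t, r, z) + pd ez F (t, r, z) * pd ez G (t, r, z)))"
proof -
  let ?f = "\<lambda>r z. F (t, r, z)" and ?fr = "\<lambda>r z. pd er F (t, r, z)" and ?fz = "\<lambda>r z. pd ez F (t, r, z)"
  let ?gr = "\<lambda>r z. pd er G (t, r, z)" and ?gz = "\<lambda>r z. pd ez G (t, r, z)"
  let ?grr = "\<lambda>r z. pd er (pd er G) (t, r, z)" and ?gzz = "\<lambda>r z. pd ez (pd ez G) (t, r, z)"
  have Fr: "SM T (pd er F)" and Fz: "SM T (pd ez F)" and Gr: "SM T (pd er G)" and Gz: "SM T (pd ez G)"
    and Grr: "SM T (pd er (pd er G))" and Gzz: "SM T (pd ez (pd ez G))"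
    using F G Basis3 by (auto intro!: SM_pd)
  note D = SM_dec[OF _ t] Fr Fz Gr Gz Grr Gzz F G
  define X where "X r z = r powr n * (?f r z * ?grr r z) + r powr n * (?f r z * ?gzz r z) + n * (r powr (n - 1) * (?f r z * ?gr r z))" for r z
  define Y where "Y r z = r powr n * (?fr r z * ?gr r z) + r powr n * (?fz r z * ?gz r z)" for r z
  have gX: "good X" unfolding X_def using n
    by (intro good_add good_cmult good_w dec_mult D) auto
  have gY: "good Y" unfolding Y_def using n
    by (intro good_add good_cmult good_w dec_mult D) auto
  have "J (\<lambda>r z. X r z + Y r z) = 0"
  proof (rule div_zero[where a="\<lambda>r z. ?f r z * ?gr r z" and pA=n and b="\<lambda>r z. ?f r z * ?gz r z" and pB=n])
    show "dec (\<lambda>r z. ?f r z * ?gr r z)" "dec (\<lambda>r z. ?f r z * ?gz r z)" by (intro dec_mult D)+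
    show "good (\<lambda>r z. n * (r powr (n - 1) * (?f r z * ?gr r z)) + r powr n * (?fr r z * ?gr r z + ?f r z * ?grr r z))"
      using n by (intro good_add good_cmult good_w dec_mult dec_add D) auto
    show "good (\<lambda>r z. r powr n * (?fz r z * ?gz r z + ?f r z * ?gzz r z))"
      using n by (intro good_add good_cmult good_w dec_mult dec_add D) auto
    show "((\<lambda>s. s powr n * (?f s z * ?gr s z)) has_real_derivative
        n * (r powr (n - 1) * (?f r z * ?gr r z)) + r powr n * (?fr r z * ?gr r z + ?f r z * ?grr r z)) (at r)"
      if "0 < r" for r z
      using DERIV_mult[OF has_real_derivative_powr[OF that, of n] DERIV_mult[OF SM_dR[OF F t] SM_dR[OF Gr t]]]
      by (simp add: algebra_simps)
    show "((\<lambda>s. r powr n * (?f r s * ?gz r s)) has_real_derivative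
        r powr n * (?fz r z * ?gz r z + ?f r z * ?gzz r z)) (at z)"
      if "0 < r" for r z
      using DERIV_cmult[OF DERIV_mult[OF SM_dZ[OF F t] SM_dZ[OF Gz t]], of "r powr n"]
      by (simp add: algebra_simps)
    show "X r z + Y r z = n * (r powr (n - 1) * (?f r z * ?gr r z)) + r powr n * (?fr r z * ?gr r z + ?f r z * ?grr r z)
        + r powr n * (?fz r z * ?gz r z + ?f r z * ?gzz r z)" if "0 < r" for r z
      unfolding X_def Y_def by (simp add: algebra_simps)
  qed (use n in auto)
  then have "J X + J Y = 0" using J_add[OF gX gY] by simp
  moreover have "J X = J (\<lambda>r z. r powr n * F (t, r, z) * (pd er (pd er G) (t, r, z) + n / r * pd er G (t, r, z) + pd ez (pd ez G) (t, r, z)))"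
  proof (rule J_cong)
    fix r z :: real assume r: "0 < r"
    have "r powr (n - 1) = r powr n / r" using r by (simp add: powr_diff)
    then show "X r z = r powr n * F (t, r, z) * (pd er (pd er G) (t, r, z) + n / r * pd er G (t, r, z) + pd ez (pd ez G) (t, r, z))"
      unfolding X_def by (simp add: algebra_simps)
  qed
  moreover have "J Y = J (\<lambda>r z. r powr n * (pd er F (t, r, z) * pd er G (t, r, z) + pd ez F (t, r, z) * pd ez G (t, r, z)))"
    by (rule J_cong) (simp add: Y_def algebra_simps)
  ultimately show ?thesis by linarith
qed


lemma dec_r: "dec g \<Longrightarrow> dec (\<lambda>r z. r * g r z)"
proof -
  assume g: "dec g"
  have c: "continuous_on UNIV (\<lambda>x. fst x * (\<lambda>(r, z). g r z) x)"
    using g by (intro continuous_on_mult continuous_intros) (auto simp: dec_def)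
  have "\<exists>C. \<forall>r z. (1 + r\<^sup>2 + z\<^sup>2) ^ k * \<bar>r * g r z\<bar> \<le> C" for k
  proof -
    obtain C where C: "\<forall>r z. (1 + r\<^sup>2 + z\<^sup>2) ^ Suc k * \<bar>g r z\<bar> \<le> C" using dec_bound[OF g] by blast
    have "(1 + r\<^sup>2 + z\<^sup>2) ^ k * \<bar>r * g r z\<bar> \<le> C" for r z
    proof -
      have "\<bar>r\<bar> \<le> 1 + r\<^sup>2 + z\<^sup>2"
      proof -
        have "\<bar>r\<bar> \<le> 1 + r\<^sup>2"
        proof (cases "\<bar>r\<bar> \<le> 1")
          case True then show ?thesis by (smt (verit) zero_le_power2)
        next
          case False
          then have "\<bar>r\<bar> * 1 \<le> \<bar>r\<bar> * \<bar>r\<bar>" by (intro mult_left_mono) auto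
          then show ?thesis by (simp add: power2_eq_square abs_mult[symmetric])
        qed
        then show ?thesis by (smt (verit) zero_le_power2)
      qed
      then have "(1 + r\<^sup>2 + z\<^sup>2) ^ k * \<bar>r * g r z\<bar> \<le> (1 + r\<^sup>2 + z\<^sup>2) ^ k * ((1 + r\<^sup>2 + z\<^sup>2) * \<bar>g r z\<bar>)"
        by (intro mult_left_mono) (auto simp: abs_mult intro!: mult_right_mono less_imp_le[OF qpos])
      also have "\<dots> = (1 + r\<^sup>2 + z\<^sup>2) ^ Suc k * \<bar>g r z\<bar>" by (simp add: algebra_simps)
      finally show ?thesis using C by (meson order_trans)
    qed
    then show ?thesis by blast
  qed
  then show ?thesis using c by (auto simp: dec_def case_prod_unfold)
qed

lemma div_zero_z:
  assumes dB: "dec b" and pB: "0 \<le> pB" "pB \<le> 8" and gB: "good B'"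
    and derB: "\<And>r z. 0 < r \<Longrightarrow> ((\<lambda>s. r powr pB * b r s) has_real_derivative B' r z) (at z)"
    and eq: "\<And>r z. 0 < r \<Longrightarrow> Z r z = B' r z"
  shows "J Z = 0"
proof -
  have "J Z = J B'" by (rule J_cong) (simp add: eq)
  also have "J B' = 0"
    by (rule div_z[OF derB gB good_lim_z(2)[OF good_w[OF dB pB]] good_lim_z(1)[OF good_w[OF dB pB]]])
  finally show ?thesis .
qed

lemma powr_n1: fixes r n :: real shows "0 < r \<Longrightarrow> r powr (n + 1) = r * r powr n"
  using powr_add[of r n 1] by simp


lemma transport_u:
  fixes n :: real
  assumes F: "SM T F" and P: "SM T P" and t: "0 < t" "t < T" and n: "2 \<le> n" "n \<le> 7"
  shows "J (\<lambda>r z. r powr n * F (t, r, z) * ((- r * pd ez P (t, r, z)) * pd er F (t, r, z)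
            + ((n + 1) / 2 * P (t, r, z) + r * pd er P (t, r, z)) * pd ez F (t, r, z)))
       = (n + 1) / 4 * J (\<lambda>r z. r powr n * ((F (t, r, z))\<^sup>2 * pd ez P (t, r, z)))"
proof -
  let ?f = "\<lambda>r z. F (t, r, z)" and ?fr = "\<lambda>r z. pd er F (t, r, z)" and ?fz = "\<lambda>r z. pd ez F (t, r, z)"
  let ?p = "\<lambda>r z. P (t, r, z)" and ?pr = "\<lambda>r z. pd er P (t, r, z)" and ?pz = "\<lambda>r z. pd ez P (t, r, z)"
  let ?prz = "\<lambda>r z. pd er (pd ez P) (t, r, z)" and ?pzr = "\<lambda>r z. pd ez (pd er P) (t, r, z)"
  have Fr: "SM T (pd er F)" and Fz: "SM T (pd ez F)" and Pr: "SM T (pd er P)" and Pz: "SM T (pd ez P)"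
    and Prz: "SM T (pd er (pd ez P))" and Pzr: "SM T (pd ez (pd er P))"
    using F P Basis3 by (auto intro!: SM_pd)
  note D = SM_dec[OF _ t] Fr Fz Pr Pz Prz Pzr F P
  have comm: "?prz r z = ?pzr r z" for r z
    using SM_comm[OF P Basis3(3) Basis3(2), of "(t, r, z)"] t by (simp add: SS_def)
  define X where "X r z = (-1) * (r powr (n + 1) * (?f r z * (?pz r z * ?fr r z))) + (n + 1) / 2 * (r powr n * (?f r z * (?p r z * ?fz r z)))
      + r powr (n + 1) * (?f r z * (?pr r z * ?fz r z))" for r z
  define Y where "Y r z = r powr n * (?f r z * (?f r z * ?pz r z))" for r z
  have gX: "good X" unfolding X_def using n
    by (intro good_add good_cmult good_w dec_mult D) auto
  have gY: "good Y" unfolding Y_def using n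
    by (intro good_add good_cmult good_w dec_mult D) auto
  have "J (\<lambda>r z. X r z - (n + 1) / 4 * Y r z) = 0"
  proof (rule div_zero[where a="\<lambda>r z. (-1/2) * (?f r z * (?f r z * ?pz r z))" and pA="n + 1"
        and b="\<lambda>r z. (1/2) * ((n + 1) / 2 * (?p r z * (?f r z * ?f r z)) + r * (?pr r z * (?f r z * ?f r z)))" and pB=n])
    show "dec (\<lambda>r z. (-1/2) * (?f r z * (?f r z * ?pz r z)))"
      by (intro dec_cmult dec_mult D)
    show "dec (\<lambda>r z. (1/2) * ((n + 1) / 2 * (?p r z * (?f r z * ?f r z)) + r * (?pr r z * (?f r z * ?f r z))))"
      by (intro dec_cmult dec_add dec_r dec_mult D)
    show "good (\<lambda>r z. (n + 1) * (r powr n * ((-1/2) * (?f r z * (?f r z * ?pz r z))))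
        + r powr (n + 1) * ((-1/2) * (?fr r z * (?f r z * ?pz r z) + ?f r z * (?fr r z * ?pz r z + ?f r z * ?prz r z))))"
      using n by (intro good_add good_cmult good_w dec_mult dec_add dec_cmult D) auto
    show "good (\<lambda>r z. r powr n * ((1/2) * ((n + 1) / 2 * (?pz r z * (?f r z * ?f r z) + ?p r z * (?fz r z * ?f r z + ?f r z * ?fz r z))
        + r * (?pzr r z * (?f r z * ?f r z) + ?pr r z * (?fz r z * ?f r z + ?f r z * ?fz r z)))))"
      using n by (intro good_add good_cmult good_w dec_mult dec_add dec_cmult dec_r D) auto
    show "((\<lambda>s. s powr (n + 1) * ((-1/2) * (?f s z * (?f s z * ?pz s z)))) has_real_derivative
        (n + 1) * (r powr n * ((-1/2) * (?f r z * (?f r z * ?pz r z))))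
        + r powr (n + 1) * ((-1/2) * (?fr r z * (?f r z * ?pz r z) + ?f r z * (?fr r z * ?pz r z + ?f r z * ?prz r z)))) (at r)"
      if "0 < r" for r z
      using DERIV_mult[OF has_real_derivative_powr[OF that, of "n + 1"]
          DERIV_cmult[OF DERIV_mult[OF SM_dR[OF F t, of z r] DERIV_mult[OF SM_dR[OF F t, of z r] SM_dR[OF Pz t, of z r]]], of "-1/2"]]
      by (simp add: algebra_simps)
    show "((\<lambda>s. r powr n * ((1/2) * ((n + 1) / 2 * (?p r s * (?f r s * ?f r s)) + r * (?pr r s * (?f r s * ?f r s))))) has_real_derivative
        r powr n * ((1/2) * ((n + 1) / 2 * (?pz r z * (?f r z * ?f r z) + ?p r z * (?fz r z * ?f r z + ?f r z * ?fz r z))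
        + r * (?pzr r z * (?f r z * ?f r z) + ?pr r z * (?fz r z * ?f r z + ?f r z * ?fz r z))))) (at z)"
      if "0 < r" for r z
      using DERIV_cmult[OF DERIV_cmult[OF DERIV_add[OF DERIV_cmult[OF DERIV_mult[OF SM_dZ[OF P t, of r z] DERIV_mult[OF SM_dZ[OF F t, of r z] SM_dZ[OF F t, of r z]]], of "(n+1)/2"]
             DERIV_cmult[OF DERIV_mult[OF SM_dZ[OF Pr t, of r z] DERIV_mult[OF SM_dZ[OF F t, of r z] SM_dZ[OF F t, of r z]]], of r]], of "1/2"], of "r powr n"]
      by (simp add: algebra_simps)
    show "X r z - (n + 1) / 4 * Y r z = (n + 1) * (r powr n * ((-1/2) * (?f r z * (?f r z * ?pz r z))))
        + r powr (n + 1) * ((-1/2) * (?fr r z * (?f r z * ?pz r z) + ?f r z * (?fr r z * ?pz r z + ?f r z * ?prz r z)))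
        + r powr n * ((1/2) * ((n + 1) / 2 * (?pz r z * (?f r z * ?f r z) + ?p r z * (?fz r z * ?f r z + ?f r z * ?fz r z))
        + r * (?pzr r z * (?f r z * ?f r z) + ?pr r z * (?fz r z * ?f r z + ?f r z * ?fz r z))))"
      if "0 < r" for r z
      unfolding X_def Y_def comm powr_n1[OF that] by (simp add: field_simps)
  qed (use n in auto)
  then have "J X - J (\<lambda>r z. (n + 1) / 4 * Y r z) = 0" by (subst J_diff[OF gX good_cmult[OF gY], symmetric])
  then have e: "J X = (n + 1) / 4 * J Y" unfolding J_cmult[OF gY] by simp
  have "J X = J (\<lambda>r z. r powr n * F (t, r, z) * ((- r * pd ez P (t, r, z)) * pd er F (t, r, z)
            + ((n + 1) / 2 * P (t, r, z) + r * pd er P (t, r, z)) * pd ez F (t, r, z)))"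
  proof (rule J_cong)
    fix r z :: real assume r: "0 < r"
    show "X r z = r powr n * F (t, r, z) * ((- r * pd ez P (t, r, z)) * pd er F (t, r, z)
            + ((n + 1) / 2 * P (t, r, z) + r * pd er P (t, r, z)) * pd ez F (t, r, z))"
      unfolding X_def powr_n1[OF r] by (simp add: algebra_simps)
  qed
  moreover have "J Y = J (\<lambda>r z. r powr n * ((F (t, r, z))\<^sup>2 * pd ez P (t, r, z)))"
    by (rule J_cong) (simp add: Y_def power2_eq_square algebra_simps)
  ultimately show ?thesis using e by simp
qed


lemma transport_psi:
  fixes n :: real
  assumes W: "SM T W" and P: "SM T P" and t: "0 < t" "t < T" and n: "2 \<le> n" "n \<le> 7"
  shows "J (\<lambda>r z. r powr n * P (t, r, z) * ((- r * pd ez P (t, r, z)) * pd er W (t, r, z)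
            + ((n + 1) / 2 * P (t, r, z) + r * pd er P (t, r, z)) * pd ez W (t, r, z))) = 0"
proof -
  let ?w = "\<lambda>r z. W (t, r, z)" and ?wr = "\<lambda>r z. pd er W (t, r, z)" and ?wz = "\<lambda>r z. pd ez W (t, r, z)"
  let ?p = "\<lambda>r z. P (t, r, z)" and ?pr = "\<lambda>r z. pd er P (t, r, z)" and ?pz = "\<lambda>r z. pd ez P (t, r, z)"
  let ?prz = "\<lambda>r z. pd er (pd ez P) (t, r, z)" and ?pzr = "\<lambda>r z. pd ez (pd er P) (t, r, z)"
  have Wr: "SM T (pd er W)" and Wz: "SM T (pd ez W)" and Pr: "SM T (pd er P)" and Pz: "SM T (pd ez P)"
    and Prz: "SM T (pd er (pd ez P))" and Pzr: "SM T (pd ez (pd er P))"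
    using W P Basis3 by (auto intro!: SM_pd)
  note D = SM_dec[OF _ t] Wr Wz Pr Pz Prz Pzr W P
  have comm: "?prz r z = ?pzr r z" for r z
    using SM_comm[OF P Basis3(3) Basis3(2), of "(t, r, z)"] t by (simp add: SS_def)
  define X where "X r z = (-1) * (r powr (n + 1) * (?p r z * (?pz r z * ?wr r z))) + (n + 1) / 2 * (r powr n * (?p r z * (?p r z * ?wz r z)))
      + r powr (n + 1) * (?p r z * (?pr r z * ?wz r z))" for r z
  have "J X = 0"
  proof (rule div_zero[where a="\<lambda>r z. (-1) * (?p r z * (?pz r z * ?w r z))" and pA="n + 1"
        and b="\<lambda>r z. (n + 1) / 2 * (?p r z * (?p r z * ?w r z)) + r * (?p r z * (?pr r z * ?w r z))" and pB=n])
    show "dec (\<lambda>r z. (-1) * (?p r z * (?pz r z * ?w r z)))"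
      by (intro dec_cmult dec_mult D)
    show "dec (\<lambda>r z. (n + 1) / 2 * (?p r z * (?p r z * ?w r z)) + r * (?p r z * (?pr r z * ?w r z)))"
      by (intro dec_cmult dec_add dec_r dec_mult D)
    show "good (\<lambda>r z. (n + 1) * (r powr n * ((-1) * (?p r z * (?pz r z * ?w r z))))
        + r powr (n + 1) * ((-1) * (?pr r z * (?pz r z * ?w r z) + ?p r z * (?prz r z * ?w r z + ?pz r z * ?wr r z))))"
      using n by (intro good_add good_cmult good_w dec_mult dec_add dec_cmult D) auto
    show "good (\<lambda>r z. r powr n * ((n + 1) / 2 * (?pz r z * (?p r z * ?w r z) + ?p r z * (?pz r z * ?w r z + ?p r z * ?wz r z))
        + r * (?pz r z * (?pr r z * ?w r z) + ?p r z * (?pzr r z * ?w r z + ?pr r z * ?wz r z))))"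
      using n by (intro good_add good_cmult good_w dec_mult dec_add dec_cmult dec_r D) auto
    show "((\<lambda>s. s powr (n + 1) * ((-1) * (?p s z * (?pz s z * ?w s z)))) has_real_derivative
        (n + 1) * (r powr n * ((-1) * (?p r z * (?pz r z * ?w r z))))
        + r powr (n + 1) * ((-1) * (?pr r z * (?pz r z * ?w r z) + ?p r z * (?prz r z * ?w r z + ?pz r z * ?wr r z)))) (at r)"
      if "0 < r" for r z
      using DERIV_mult[OF has_real_derivative_powr[OF that, of "n + 1"]
          DERIV_cmult[OF DERIV_mult[OF SM_dR[OF P t, of z r] DERIV_mult[OF SM_dR[OF Pz t, of z r] SM_dR[OF W t, of z r]]], of "-1"]]
      by (simp add: algebra_simps)
    show "((\<lambda>s. r powr n * ((n + 1) / 2 * (?p r s * (?p r s * ?w r s)) + r * (?p r s * (?pr r s * ?w r s)))) has_real_derivative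
        r powr n * ((n + 1) / 2 * (?pz r z * (?p r z * ?w r z) + ?p r z * (?pz r z * ?w r z + ?p r z * ?wz r z))
        + r * (?pz r z * (?pr r z * ?w r z) + ?p r z * (?pzr r z * ?w r z + ?pr r z * ?wz r z)))) (at z)"
      if "0 < r" for r z
      using DERIV_cmult[OF DERIV_add[OF DERIV_cmult[OF DERIV_mult[OF SM_dZ[OF P t, of r z] DERIV_mult[OF SM_dZ[OF P t, of r z] SM_dZ[OF W t, of r z]]], of "(n+1)/2"]
             DERIV_cmult[OF DERIV_mult[OF SM_dZ[OF P t, of r z] DERIV_mult[OF SM_dZ[OF Pr t, of r z] SM_dZ[OF W t, of r z]]], of r]], of "r powr n"]
      by (simp add: algebra_simps)
    show "X r z = (n + 1) * (r powr n * ((-1) * (?p r z * (?pz r z * ?w r z))))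
        + r powr (n + 1) * ((-1) * (?pr r z * (?pz r z * ?w r z) + ?p r z * (?prz r z * ?w r z + ?pz r z * ?wr r z)))
        + r powr n * ((n + 1) / 2 * (?pz r z * (?p r z * ?w r z) + ?p r z * (?pz r z * ?w r z + ?p r z * ?wz r z))
        + r * (?pz r z * (?pr r z * ?w r z) + ?p r z * (?pzr r z * ?w r z + ?pr r z * ?wz r z)))"
      if "0 < r" for r z
      unfolding X_def comm powr_n1[OF that] by (simp add: field_simps)
  qed (use n in auto)
  moreover have "J X = J (\<lambda>r z. r powr n * P (t, r, z) * ((- r * pd ez P (t, r, z)) * pd er W (t, r, z)
            + ((n + 1) / 2 * P (t, r, z) + r * pd er P (t, r, z)) * pd ez W (t, r, z)))"
  proof (rule J_cong)
    fix r z :: real assume r: "0 < r"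
    show "X r z = r powr n * P (t, r, z) * ((- r * pd ez P (t, r, z)) * pd er W (t, r, z)
            + ((n + 1) / 2 * P (t, r, z) + r * pd er P (t, r, z)) * pd ez W (t, r, z))"
      unfolding X_def powr_n1[OF r] by (simp add: algebra_simps)
  qed
  ultimately show ?thesis by simp
qed

lemma byparts_z:
  fixes n :: real
  assumes F: "SM T F" and P: "SM T P" and t: "0 < t" "t < T" and n: "2 \<le> n" "n \<le> 7"
  shows "J (\<lambda>r z. r powr n * P (t, r, z) * (2 * F (t, r, z) * pd ez F (t, r, z)))
       = - J (\<lambda>r z. r powr n * (pd ez P (t, r, z) * (F (t, r, z))\<^sup>2))"
proof -
  let ?f = "\<lambda>r z. F (t, r, z)" and ?fz = "\<lambda>r z. pd ez F (t, r, z)"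
  let ?p = "\<lambda>r z. P (t, r, z)" and ?pz = "\<lambda>r z. pd ez P (t, r, z)"
  have Fz: "SM T (pd ez F)" and Pz: "SM T (pd ez P)" using F P Basis3 by (auto intro!: SM_pd)
  note D = SM_dec[OF _ t] Fz Pz F P
  define X where "X r z = 2 * (r powr n * (?p r z * (?f r z * ?fz r z)))" for r z
  define Y where "Y r z = r powr n * (?pz r z * (?f r z * ?f r z))" for r z
  have gX: "good X" unfolding X_def using n by (intro good_add good_cmult good_w dec_mult D) auto
  have gY: "good Y" unfolding Y_def using n by (intro good_add good_cmult good_w dec_mult D) auto
  have "J (\<lambda>r z. X r z + Y r z) = 0"
  proof (rule div_zero_z[where b="\<lambda>r z. ?p r z * (?f r z * ?f r z)" and pB=n])
    show "dec (\<lambda>r z. ?p r z * (?f r z * ?f r z))" by (intro dec_mult D)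
    show "good (\<lambda>r z. r powr n * (?pz r z * (?f r z * ?f r z) + ?p r z * (?fz r z * ?f r z + ?f r z * ?fz r z)))"
      using n by (intro good_add good_cmult good_w dec_mult dec_add D) auto
    show "((\<lambda>s. r powr n * (?p r s * (?f r s * ?f r s))) has_real_derivative
        r powr n * (?pz r z * (?f r z * ?f r z) + ?p r z * (?fz r z * ?f r z + ?f r z * ?fz r z))) (at z)" for r z
      using DERIV_cmult[OF DERIV_mult[OF SM_dZ[OF P t, of r z] DERIV_mult[OF SM_dZ[OF F t, of r z] SM_dZ[OF F t, of r z]]], of "r powr n"]
      by (simp add: algebra_simps)
    show "X r z + Y r z = r powr n * (?pz r z * (?f r z * ?f r z) + ?p r z * (?fz r z * ?f r z + ?f r z * ?fz r z))" for r z
      unfolding X_def Y_def by (simp add: algebra_simps)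
  qed (use n in auto)
  then have "J X + J Y = 0" using J_add[OF gX gY] by simp
  moreover have "J X = J (\<lambda>r z. r powr n * P (t, r, z) * (2 * F (t, r, z) * pd ez F (t, r, z)))"
    by (rule J_cong) (simp add: X_def algebra_simps)
  moreover have "J Y = J (\<lambda>r z. r powr n * (pd ez P (t, r, z) * (F (t, r, z))\<^sup>2))"
    by (rule J_cong) (simp add: Y_def power2_eq_square algebra_simps)
  ultimately show ?thesis by linarith
qed


definition udec :: "real \<Rightarrow> real \<Rightarrow> (real \<Rightarrow> real \<Rightarrow> real \<Rightarrow> real) \<Rightarrow> bool" where
  "udec a b g \<longleftrightarrow> (\<forall>k::nat. \<exists>C. \<forall>\<tau>\<in>{a..b}. \<forall>r z. (1 + r\<^sup>2 + z\<^sup>2) ^ k * \<bar>g \<tau> r z\<bar> \<le> C)"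

lemma udec_bound: "udec a b g \<Longrightarrow> a \<le> b \<Longrightarrow> \<exists>C\<ge>0. \<forall>\<tau>\<in>{a..b}. \<forall>r z. (1 + r\<^sup>2 + z\<^sup>2) ^ k * \<bar>g \<tau> r z\<bar> \<le> C"
proof -
  assume "udec a b g" "a \<le> b"
  then obtain C where C: "\<forall>\<tau>\<in>{a..b}. \<forall>r z. (1 + r\<^sup>2 + z\<^sup>2) ^ k * \<bar>g \<tau> r z\<bar> \<le> C" unfolding udec_def by blast
  have "0 \<le> (1 + 0\<^sup>2 + 0\<^sup>2 :: real) ^ k * \<bar>g a 0 0\<bar>" by simp
  then have "0 \<le> C" using C \<open>a \<le> b\<close> by (meson atLeastAtMost_iff order_refl order_trans)
  with C show ?thesis by blast
qed

lemma udec_add: "udec a b f \<Longrightarrow> udec a b g \<Longrightarrow> udec a b (\<lambda>\<tau> r z. f \<tau> r z + g \<tau> r z)"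
proof -
  assume f: "udec a b f" and g: "udec a b g"
  have "\<exists>C. \<forall>\<tau>\<in>{a..b}. \<forall>r z. (1 + r\<^sup>2 + z\<^sup>2) ^ k * \<bar>f \<tau> r z + g \<tau> r z\<bar> \<le> C" for k
  proof -
    obtain C1 where C1: "\<forall>\<tau>\<in>{a..b}. \<forall>r z. (1 + r\<^sup>2 + z\<^sup>2) ^ k * \<bar>f \<tau> r z\<bar> \<le> C1" using f unfolding udec_def by blast
    obtain C2 where C2: "\<forall>\<tau>\<in>{a..b}. \<forall>r z. (1 + r\<^sup>2 + z\<^sup>2) ^ k * \<bar>g \<tau> r z\<bar> \<le> C2" using g unfolding udec_def by blast
    have "(1 + r\<^sup>2 + z\<^sup>2) ^ k * \<bar>f \<tau> r z + g \<tau> r z\<bar> \<le> C1 + C2" if "\<tau> \<in> {a..b}" for \<tau> r z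
    proof -
      have "(1 + r\<^sup>2 + z\<^sup>2) ^ k * \<bar>f \<tau> r z + g \<tau> r z\<bar> \<le> (1 + r\<^sup>2 + z\<^sup>2) ^ k * (\<bar>f \<tau> r z\<bar> + \<bar>g \<tau> r z\<bar>)"
        by (intro mult_left_mono abs_triangle_ineq) (simp add: add_nonneg_nonneg)
      also have "\<dots> \<le> C1 + C2" using C1 C2 that by (simp add: distrib_left add_mono)
      finally show ?thesis .
    qed
    then show ?thesis by blast
  qed
  then show ?thesis by (auto simp: udec_def)
qed

lemma udec_mult: "udec a b f \<Longrightarrow> udec a b g \<Longrightarrow> a \<le> b \<Longrightarrow> udec a b (\<lambda>\<tau> r z. f \<tau> r z * g \<tau> r z)"
proof -
  assume f: "udec a b f" and g: "udec a b g" and ab: "a \<le> b"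
  have "\<exists>C. \<forall>\<tau>\<in>{a..b}. \<forall>r z. (1 + r\<^sup>2 + z\<^sup>2) ^ k * \<bar>f \<tau> r z * g \<tau> r z\<bar> \<le> C" for k
  proof -
    obtain C1 where C1: "\<forall>\<tau>\<in>{a..b}. \<forall>r z. (1 + r\<^sup>2 + z\<^sup>2) ^ k * \<bar>f \<tau> r z\<bar> \<le> C1" "C1 \<ge> 0" using udec_bound[OF f ab] by blast
    obtain C2 where C2: "\<forall>\<tau>\<in>{a..b}. \<forall>r z. (1 + r\<^sup>2 + z\<^sup>2) ^ 0 * \<bar>g \<tau> r z\<bar> \<le> C2" "C2 \<ge> 0" using udec_bound[OF g ab] by blast
    have "(1 + r\<^sup>2 + z\<^sup>2) ^ k * \<bar>f \<tau> r z * g \<tau> r z\<bar> \<le> C1 * C2" if "\<tau> \<in> {a..b}" for \<tau> r z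
    proof -
      have "(1 + r\<^sup>2 + z\<^sup>2) ^ k * \<bar>f \<tau> r z * g \<tau> r z\<bar> = ((1 + r\<^sup>2 + z\<^sup>2) ^ k * \<bar>f \<tau> r z\<bar>) * \<bar>g \<tau> r z\<bar>"
        by (simp add: abs_mult)
      also have "\<dots> \<le> C1 * C2" using C1 C2 that by (intro mult_mono) auto
      finally show ?thesis .
    qed
    then show ?thesis by blast
  qed
  then show ?thesis by (auto simp: udec_def)
qed

lemma udec_cmult: "udec a b f \<Longrightarrow> udec a b (\<lambda>\<tau> r z. c * f \<tau> r z)"
proof -
  assume f: "udec a b f"
  have "\<exists>C. \<forall>\<tau>\<in>{a..b}. \<forall>r z. (1 + r\<^sup>2 + z\<^sup>2) ^ k * \<bar>c * f \<tau> r z\<bar> \<le> C" for k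
  proof -
    obtain C1 where C1: "\<forall>\<tau>\<in>{a..b}. \<forall>r z. (1 + r\<^sup>2 + z\<^sup>2) ^ k * \<bar>f \<tau> r z\<bar> \<le> C1" using f unfolding udec_def by blast
    have "(1 + r\<^sup>2 + z\<^sup>2) ^ k * \<bar>c * f \<tau> r z\<bar> \<le> \<bar>c\<bar> * C1" if "\<tau> \<in> {a..b}" for \<tau> r z
      using mult_left_mono[OF C1[rule_format, OF that, of r z], of "\<bar>c\<bar>"] by (simp add: abs_mult ac_simps)
    then show ?thesis by blast
  qed
  then show ?thesis by (auto simp: udec_def)
qed

lemma SM_udec: "SM T G \<Longrightarrow> 0 < a \<Longrightarrow> a \<le> b \<Longrightarrow> b < T \<Longrightarrow> udec a b (\<lambda>\<tau> r z. G (\<tau>, r, z))"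
proof -
  assume G: "SM T G" and ab: "0 < a" "a \<le> b" "b < T"
  have "rapid_decay T G" using G by (simp add: SM_def)
  then show ?thesis unfolding rapid_decay_def udec_def using ab
    by (intro allI, drule_tac x=a in spec, drule_tac x=b in spec, drule_tac x="[]" in spec) simp
qed

lemma udec_weight:
  assumes g: "udec a b g" and ab: "a \<le> b" and p: "0 \<le> p" "p \<le> 8"
  shows "\<exists>C. \<forall>\<tau>\<in>{a..b}. \<forall>r>0. \<forall>z. \<bar>r powr p * g \<tau> r z\<bar> \<le> C * hb r z"
proof -
  obtain C where C: "\<forall>\<tau>\<in>{a..b}. \<forall>r z. (1 + r\<^sup>2 + z\<^sup>2) ^ 6 * \<bar>g \<tau> r z\<bar> \<le> C" "C \<ge> 0" using udec_bound[OF g ab] by blast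
  have "\<bar>r powr p * g \<tau> r z\<bar> \<le> C * hb r z" if r: "0 < r" and \<tau>: "\<tau> \<in> {a..b}" for \<tau> r z
  proof -
    let ?q = "1 + r\<^sup>2 + z\<^sup>2"
    have q: "0 < ?q" by (rule qpos)
    have "\<bar>r powr p * g \<tau> r z\<bar> = r powr p * \<bar>g \<tau> r z\<bar>" using r by (simp add: abs_mult)
    also have "\<dots> \<le> ?q ^ 4 * \<bar>g \<tau> r z\<bar>" using rp_bound[OF r p] by (intro mult_right_mono) auto
    also have "\<dots> = (?q ^ 4 * ?q ^ 2 * \<bar>g \<tau> r z\<bar>) * inverse (?q ^ 2)"
      using q by (intro aux_inv) simp
    also have "\<dots> = (?q ^ 6 * \<bar>g \<tau> r z\<bar>) * inverse (?q ^ 2)"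
      by (simp flip: power_add)
    also have "\<dots> \<le> C * inverse (?q ^ 2)" using C \<tau> q by (intro mult_right_mono) auto
    also have "\<dots> \<le> C * hb r z" using C hb_ge by (intro mult_left_mono) auto
    finally show ?thesis .
  qed
  then show ?thesis by blast
qed

lemma energy_deriv:
  fixes n c :: real
  assumes U: "SM T U" and P: "SM T P" and t: "0 < t0" "t0 < T" and n: "2 \<le> n" "n \<le> 7"
  shows "((\<lambda>\<tau>. J (\<lambda>r z. ((U (\<tau>, r, z))\<^sup>2 + c * ((pd er P (\<tau>, r, z))\<^sup>2 + (pd ez P (\<tau>, r, z))\<^sup>2)) * r powr n))
      has_real_derivative J (\<lambda>r z. (2 * U (t0, r, z) * pd et U (t0, r, z) + c * (2 * pd er P (t0, r, z) * pd et (pd er P) (t0, r, z)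
          + 2 * pd ez P (t0, r, z) * pd et (pd ez P) (t0, r, z))) * r powr n)) (at t0)"
proof -
  define a where "a = t0 / 2"
  define b where "b = (t0 + T) / 2"
  have ab: "0 < a" "a < t0" "t0 < b" "b < T" "a \<le> b" using t by (auto simp: a_def b_def)
  have Pr: "SM T (pd er P)" and Pz: "SM T (pd ez P)" and Ut: "SM T (pd et U)"
    and Prt: "SM T (pd et (pd er P))" and Pzt: "SM T (pd et (pd ez P))"
    using U P Basis3 by (auto intro!: SM_pd)
  define e' where "e' \<tau> r z = (2 * U (\<tau>, r, z) * pd et U (\<tau>, r, z) + c * (2 * pd er P (\<tau>, r, z) * pd et (pd er P) (\<tau>, r, z)
          + 2 * pd ez P (\<tau>, r, z) * pd et (pd ez P) (\<tau>, r, z))) * r powr n" for \<tau> r z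
  have gi: "good (\<lambda>r z. ((U (\<tau>, r, z))\<^sup>2 + c * ((pd er P (\<tau>, r, z))\<^sup>2 + (pd ez P (\<tau>, r, z))\<^sup>2)) * r powr n)"
    if "0 < \<tau>" "\<tau> < T" for \<tau>
  proof -
    note D = SM_dec[OF _ that] U Pr Pz
    have "good (\<lambda>r z. r powr n * (U (\<tau>, r, z) * U (\<tau>, r, z)) + c * (r powr n * (pd er P (\<tau>, r, z) * pd er P (\<tau>, r, z))
       + r powr n * (pd ez P (\<tau>, r, z) * pd ez P (\<tau>, r, z))))"
      using n by (intro good_add good_cmult good_w dec_mult D) auto
    then show ?thesis by (rule good_cong[rotated]) (simp add: power2_eq_square algebra_simps)
  qed
  have ge': "good (e' \<tau>)" if "0 < \<tau>" "\<tau> < T" for \<tau>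
  proof -
    note D = SM_dec[OF _ that] U Pr Pz Ut Prt Pzt
    have "good (\<lambda>r z. 2 * (r powr n * (U (\<tau>, r, z) * pd et U (\<tau>, r, z))) + c * (2 * (r powr n * (pd er P (\<tau>, r, z) * pd et (pd er P) (\<tau>, r, z)))
       + 2 * (r powr n * (pd ez P (\<tau>, r, z) * pd et (pd ez P) (\<tau>, r, z)))))"
      using n by (intro good_add good_cmult good_w dec_mult D) auto
    then show ?thesis by (rule good_cong[rotated]) (simp add: e'_def algebra_simps)
  qed
  obtain C where C: "\<forall>\<tau>\<in>{a..b}. \<forall>r>0. \<forall>z. \<bar>r powr n * (2 * (U (\<tau>, r, z) * pd et U (\<tau>, r, z)) + c * (2 * (pd er P (\<tau>, r, z) * pd et (pd er P) (\<tau>, r, z))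
       + 2 * (pd ez P (\<tau>, r, z) * pd et (pd ez P) (\<tau>, r, z))))\<bar> \<le> C * hb r z"
  proof -
    note D = SM_udec[OF _ ab(1) ab(5) ab(4)] U Pr Pz Ut Prt Pzt
    have "udec a b (\<lambda>\<tau> r z. 2 * (U (\<tau>, r, z) * pd et U (\<tau>, r, z)) + c * (2 * (pd er P (\<tau>, r, z) * pd et (pd er P) (\<tau>, r, z))
       + 2 * (pd ez P (\<tau>, r, z) * pd et (pd ez P) (\<tau>, r, z))))"
      using ab by (intro udec_add udec_cmult udec_mult D) auto
    from udec_weight[OF this ab(5), of n] n
    have "\<exists>C. \<forall>\<tau>\<in>{a..b}. \<forall>r>0. \<forall>z. \<bar>r powr n * (2 * (U (\<tau>, r, z) * pd et U (\<tau>, r, z)) + c * (2 * (pd er P (\<tau>, r, z) * pd et (pd er P) (\<tau>, r, z))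
       + 2 * (pd ez P (\<tau>, r, z) * pd et (pd ez P) (\<tau>, r, z))))\<bar> \<le> C * hb r z" by simp
    then show ?thesis using that by blast
  qed
  show ?thesis
  proof (rule J_deriv[where a=a and b=b and C=C and e'=e', unfolded e'_def])
    show "a < t0" "t0 < b" using ab by auto
    show "good (\<lambda>r z. ((U (\<tau>, r, z))\<^sup>2 + c * ((pd er P (\<tau>, r, z))\<^sup>2 + (pd ez P (\<tau>, r, z))\<^sup>2)) * r powr n)"
      if "a < \<tau>" "\<tau> < b" for \<tau> using gi that ab by auto
    show "good (\<lambda>r z. (2 * U (t0, r, z) * pd et U (t0, r, z) + c * (2 * pd er P (t0, r, z) * pd et (pd er P) (t0, r, z)
          + 2 * pd ez P (t0, r, z) * pd et (pd ez P) (t0, r, z))) * r powr n)"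
      using ge'[OF t] unfolding e'_def[abs_def] by simp
    show "((\<lambda>s. ((U (s, r, z))\<^sup>2 + c * ((pd er P (s, r, z))\<^sup>2 + (pd ez P (s, r, z))\<^sup>2)) * r powr n) has_real_derivative
        (2 * U (\<tau>, r, z) * pd et U (\<tau>, r, z) + c * (2 * pd er P (\<tau>, r, z) * pd et (pd er P) (\<tau>, r, z)
          + 2 * pd ez P (\<tau>, r, z) * pd et (pd ez P) (\<tau>, r, z))) * r powr n) (at \<tau>)"
      if "a < \<tau>" "\<tau> < b" "0 < r" for \<tau> r z
    proof -
      have \<tau>: "0 < \<tau>" "\<tau> < T" using that ab by auto
      show ?thesis
        using DERIV_mult[OF DERIV_add[OF DERIV_power[OF SM_dT[OF U \<tau>, of r z], of 2]
          DERIV_cmult[OF DERIV_add[OF DERIV_power[OF SM_dT[OF Pr \<tau>, of r z], of 2] DERIV_power[OF SM_dT[OF Pz \<tau>, of r z], of 2]], of c]]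
          DERIV_const[of "r powr n"]]
        by (simp add: algebra_simps)
    qed
    show "\<bar>(2 * U (\<tau>, r, z) * pd et U (\<tau>, r, z) + c * (2 * pd er P (\<tau>, r, z) * pd et (pd er P) (\<tau>, r, z)
          + 2 * pd ez P (\<tau>, r, z) * pd et (pd ez P) (\<tau>, r, z))) * r powr n\<bar> \<le> C * hb r z"
      if "a < \<tau>" "\<tau> < b" "0 < r" for \<tau> r z
      using C[rule_format, of \<tau> r z] that by (simp add: algebra_simps)
  qed
qed


definition lapp :: "real \<Rightarrow> (real \<times> real \<times> real \<Rightarrow> real) \<Rightarrow> real \<Rightarrow> real \<Rightarrow> real \<Rightarrow> real" where
  "lapp n G t r z = pd er (pd er G) (t, r, z) + n / r * pd er G (t, r, z) + pd ez (pd ez G) (t, r, z)"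

lemma good_lap:
  fixes n :: real
  assumes F: "SM T F" and G: "SM T G" and t: "0 < t" "t < T" and n: "2 \<le> n" "n \<le> 7"
  shows "good (\<lambda>r z. r powr n * F (t, r, z) * lapp n G t r z)"
proof -
  have Gr: "SM T (pd er G)" and Grr: "SM T (pd er (pd er G))" and Gzz: "SM T (pd ez (pd ez G))"
    using G Basis3 by (auto intro!: SM_pd)
  note D = SM_dec[OF _ t] F Gr Grr Gzz
  have "good (\<lambda>r z. r powr n * (F (t, r, z) * pd er (pd er G) (t, r, z)) + r powr n * (F (t, r, z) * pd ez (pd ez G) (t, r, z))
      + n * (r powr (n - 1) * (F (t, r, z) * pd er G (t, r, z))))"
    using n by (intro good_add good_cmult good_w dec_mult D) auto
  then show ?thesis
  proof (rule good_cong[rotated])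
    fix r z :: real assume r: "0 < r"
    have "r powr (n - 1) = r powr n / r" using r by (simp add: powr_diff)
    then show "r powr n * (F (t, r, z) * pd er (pd er G) (t, r, z)) + r powr n * (F (t, r, z) * pd ez (pd ez G) (t, r, z))
      + n * (r powr (n - 1) * (F (t, r, z) * pd er G (t, r, z))) = r powr n * F (t, r, z) * lapp n G t r z"
      by (simp add: lapp_def algebra_simps)
  qed
qed

lemma good_transport:
  fixes n :: real
  assumes F: "SM T F" and G: "SM T G" and P: "SM T P" and t: "0 < t" "t < T" and n: "2 \<le> n" "n \<le> 7"
  shows "good (\<lambda>r z. r powr n * F (t, r, z) * ((- r * pd ez P (t, r, z)) * pd er G (t, r, z)
            + ((n + 1) / 2 * P (t, r, z) + r * pd er P (t, r, z)) * pd ez G (t, r, z)))"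
proof -
  have Gr: "SM T (pd er G)" and Gz: "SM T (pd ez G)" and Pr: "SM T (pd er P)" and Pz: "SM T (pd ez P)"
    using G P Basis3 by (auto intro!: SM_pd)
  note D = SM_dec[OF _ t] F Gr Gz Pr Pz P
  have "good (\<lambda>r z. (-1) * (r powr (n + 1) * (F (t, r, z) * (pd ez P (t, r, z) * pd er G (t, r, z))))
      + (n + 1) / 2 * (r powr n * (F (t, r, z) * (P (t, r, z) * pd ez G (t, r, z))))
      + r powr (n + 1) * (F (t, r, z) * (pd er P (t, r, z) * pd ez G (t, r, z))))"
    using n by (intro good_add good_cmult good_w dec_mult D) auto
  then show ?thesis
  proof (rule good_cong[rotated])
    fix r z :: real assume r: "0 < r"
    show "(-1) * (r powr (n + 1) * (F (t, r, z) * (pd ez P (t, r, z) * pd er G (t, r, z))))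
      + (n + 1) / 2 * (r powr n * (F (t, r, z) * (P (t, r, z) * pd ez G (t, r, z))))
      + r powr (n + 1) * (F (t, r, z) * (pd er P (t, r, z) * pd ez G (t, r, z))) =
      r powr n * F (t, r, z) * ((- r * pd ez P (t, r, z)) * pd er G (t, r, z)
            + ((n + 1) / 2 * P (t, r, z) + r * pd er P (t, r, z)) * pd ez G (t, r, z))"
      unfolding powr_n1[OF r] by (simp add: algebra_simps)
  qed
qed

lemma J_lin3:
  assumes "good a" "good b" "good c"
  shows "J (\<lambda>r z. \<alpha> * a r z + \<beta> * b r z + \<gamma> * c r z) = \<alpha> * J a + \<beta> * J b + \<gamma> * J c"
  using assms
  by (simp add: J_add good_add good_cmult J_cmult)

lemma wt_lemma:
  fixes n :: real
  assumes P: "SM T P" and W: "SM T W" and t: "0 < t" "t < T" and r: "0 < r"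
    and ep: "\<And>\<tau>. 0 < \<tau> \<Longrightarrow> \<tau> < T \<Longrightarrow> W (\<tau>, r, z) = - lapp n P \<tau> r z"
  shows "pd et W (t, r, z) = - lapp n (pd et P) t r z"
proof -
  have Pr: "SM T (pd er P)" and Pz: "SM T (pd ez P)" and Prr: "SM T (pd er (pd er P))" and Pzz: "SM T (pd ez (pd ez P))"
    using P Basis3 by (auto intro!: SM_pd)
  have d1: "((\<lambda>s. - (pd er (pd er P) (s, r, z) + n / r * pd er P (s, r, z) + pd ez (pd ez P) (s, r, z))) has_real_derivative
      - (pd et (pd er (pd er P)) (t, r, z) + n / r * pd et (pd er P) (t, r, z) + pd et (pd ez (pd ez P)) (t, r, z))) (at t)"
    using DERIV_minus[OF DERIV_add[OF DERIV_add[OF SM_dT[OF Prr t, of r z] DERIV_cmult[OF SM_dT[OF Pr t, of r z], of "n / r"]] SM_dT[OF Pzz t, of r z]]]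
    by simp
  have d2: "((\<lambda>s. W (s, r, z)) has_real_derivative
      - (pd et (pd er (pd er P)) (t, r, z) + n / r * pd et (pd er P) (t, r, z) + pd et (pd ez (pd ez P)) (t, r, z))) (at t)"
    by (rule has_field_derivative_transform_within_open[OF d1, where S="{0<..<T}"]) (use t ep in \<open>auto simp: lapp_def\<close>)
  have e1: "pd et W (t, r, z) = - (pd et (pd er (pd er P)) (t, r, z) + n / r * pd et (pd er P) (t, r, z) + pd et (pd ez (pd ez P)) (t, r, z))"
    using DERIV_unique[OF SM_dT[OF W t] d2] .
  have x: "(t, r, z) \<in> SS T" using t by (simp add: SS_def)
  have c0: "pd et (pd er P) y = pd er (pd et P) y" if "y \<in> SS T" for y
    using SM_comm[OF P Basis3(2) Basis3(1) that] .
  have c0z: "pd et (pd ez P) y = pd ez (pd et P) y" if "y \<in> SS T" for y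
    using SM_comm[OF P Basis3(3) Basis3(1) that] .
  have c1: "pd et (pd er (pd er P)) (t, r, z) = pd er (pd er (pd et P)) (t, r, z)"
  proof -
    have "pd et (pd er (pd er P)) (t, r, z) = pd er (pd et (pd er P)) (t, r, z)"
      using SM_comm[OF Pr Basis3(2) Basis3(1) x] .
    also have "\<dots> = pd er (pd er (pd et P)) (t, r, z)"
      by (rule pd_cong_SS[OF c0 x]) auto
    finally show ?thesis .
  qed
  have c2: "pd et (pd ez (pd ez P)) (t, r, z) = pd ez (pd ez (pd et P)) (t, r, z)"
  proof -
    have "pd et (pd ez (pd ez P)) (t, r, z) = pd ez (pd et (pd ez P)) (t, r, z)"
      using SM_comm[OF Pz Basis3(3) Basis3(1) x] .
    also have "\<dots> = pd ez (pd ez (pd et P)) (t, r, z)"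
      by (rule pd_cong_SS[OF c0z x]) auto
    finally show ?thesis .
  qed
  show ?thesis using e1 c1 c2 c0[OF x] by (simp add: lapp_def)
qed


lemma J_lin2:
  assumes "good a" "good b"
  shows "J (\<lambda>r z. \<alpha> * a r z + \<beta> * b r z) = \<alpha> * J a + \<beta> * J b"
  using assms by (simp add: J_add good_cmult J_cmult)

lemma energy_identity:
  fixes n \<nu>1 \<nu>2 :: real
  assumes U: "SM T U" and P: "SM T P" and W: "SM T W" and t: "0 < t" "t < T" and n: "2 \<le> n" "n \<le> 7"
    and eu: "\<And>r z. 0 < r \<Longrightarrow> pd et U (t, r, z) = - ((- r * pd ez P (t, r, z)) * pd er U (t, r, z)
        + ((n + 1) / 2 * P (t, r, z) + r * pd er P (t, r, z)) * pd ez U (t, r, z))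
        + 2 * U (t, r, z) * pd ez P (t, r, z) + \<nu>1 * lapp n U t r z"
    and ew: "\<And>r z. 0 < r \<Longrightarrow> pd et W (t, r, z) = - ((- r * pd ez P (t, r, z)) * pd er W (t, r, z)
        + ((n + 1) / 2 * P (t, r, z) + r * pd er P (t, r, z)) * pd ez W (t, r, z))
        + 2 * U (t, r, z) * pd ez U (t, r, z) + \<nu>2 * lapp n W t r z"
    and ep: "\<And>\<tau> r z. 0 < \<tau> \<Longrightarrow> \<tau> < T \<Longrightarrow> 0 < r \<Longrightarrow> W (\<tau>, r, z) = - lapp n P \<tau> r z"
  shows "J (\<lambda>r z. (2 * U (t, r, z) * pd et U (t, r, z) + (7 - n) / 4 * (2 * pd er P (t, r, z) * pd et (pd er P) (t, r, z)
          + 2 * pd ez P (t, r, z) * pd et (pd ez P) (t, r, z))) * r powr n)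
    = 2 * (- \<nu>1 * J (\<lambda>r z. ((pd er U (t, r, z))\<^sup>2 + (pd ez U (t, r, z))\<^sup>2) * r powr n)
           - \<nu>2 * ((7 - n) / 4) * J (\<lambda>r z. (lapp n P t r z)\<^sup>2 * r powr n))"
proof -
  define c where "c = (7 - n) / 4"
  have Ur: "SM T (pd er U)" and Uz: "SM T (pd ez U)" and Ut: "SM T (pd et U)"
    and Pr: "SM T (pd er P)" and Pz: "SM T (pd ez P)" and Pt: "SM T (pd et P)"
    and Prt: "SM T (pd et (pd er P))" and Pzt: "SM T (pd et (pd ez P))"
    and Wt: "SM T (pd et W)"
    using U P W Basis3 by (auto intro!: SM_pd)
  note D = SM_dec[OF _ t] U P W Ur Uz Ut Pr Pz Pt Prt Pzt Wt
  have x: "\<And>r z. (t, r, z) \<in> SS T" using t by (simp add: SS_def)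
  define Eu where "Eu r z = r powr n * (U (t, r, z) * pd et U (t, r, z))" for r z
  define Ep where "Ep r z = r powr n * (pd er P (t, r, z) * pd et (pd er P) (t, r, z) + pd ez P (t, r, z) * pd et (pd ez P) (t, r, z))" for r z
  have gEu: "good Eu" unfolding Eu_def using n by (intro good_w dec_mult D) auto
  have gEp: "good Ep" unfolding Ep_def using n by (intro good_w dec_add dec_mult D) auto
  have S1: "J (\<lambda>r z. (2 * U (t, r, z) * pd et U (t, r, z) + (7 - n) / 4 * (2 * pd er P (t, r, z) * pd et (pd er P) (t, r, z)
          + 2 * pd ez P (t, r, z) * pd et (pd ez P) (t, r, z))) * r powr n) = 2 * J Eu + (2 * c) * J Ep"
  proof -
    have "J (\<lambda>r z. (2 * U (t, r, z) * pd et U (t, r, z) + (7 - n) / 4 * (2 * pd er P (t, r, z) * pd et (pd er P) (t, r, z)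
          + 2 * pd ez P (t, r, z) * pd et (pd ez P) (t, r, z))) * r powr n) = J (\<lambda>r z. 2 * Eu r z + (2 * c) * Ep r z)"
      by (rule J_cong) (simp add: Eu_def Ep_def c_def algebra_simps)
    also have "\<dots> = 2 * J Eu + (2 * c) * J Ep" by (rule J_lin2[OF gEu gEp])
    finally show ?thesis .
  qed
  define Tu where "Tu r z = r powr n * U (t, r, z) * ((- r * pd ez P (t, r, z)) * pd er U (t, r, z)
            + ((n + 1) / 2 * P (t, r, z) + r * pd er P (t, r, z)) * pd ez U (t, r, z))" for r z
  define K where "K r z = r powr n * ((U (t, r, z))\<^sup>2 * pd ez P (t, r, z))" for r z
  define Lu where "Lu r z = r powr n * U (t, r, z) * lapp n U t r z" for r z
  have gTu: "good Tu" unfolding Tu_def by (rule good_transport[OF U U P t n])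
  have gLu: "good Lu" unfolding Lu_def by (rule good_lap[OF U U t n])
  have gK: "good K"
  proof -
    have "good (\<lambda>r z. r powr n * (U (t, r, z) * (U (t, r, z) * pd ez P (t, r, z))))"
      using n by (intro good_w dec_mult D) auto
    then show ?thesis by (rule good_cong[rotated]) (simp add: K_def power2_eq_square algebra_simps)
  qed
  have S2: "J Eu = (-1) * J Tu + 2 * J K + \<nu>1 * J Lu"
  proof -
    have "J Eu = J (\<lambda>r z. (-1) * Tu r z + 2 * K r z + \<nu>1 * Lu r z)"
      by (rule J_cong) (simp add: Eu_def Tu_def K_def Lu_def eu power2_eq_square field_simps)
    also have "\<dots> = (-1) * J Tu + 2 * J K + \<nu>1 * J Lu" by (rule J_lin3[OF gTu gK gLu])
    finally show ?thesis .
  qed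
  have TuK: "J Tu = (n + 1) / 4 * J K"
    unfolding Tu_def K_def by (rule transport_u[OF U P t n])
  define J1 where "J1 = J (\<lambda>r z. ((pd er U (t, r, z))\<^sup>2 + (pd ez U (t, r, z))\<^sup>2) * r powr n)"
  have LuJ1: "J Lu = - J1"
  proof -
    have "J Lu = - J (\<lambda>r z. r powr n * (pd er U (t, r, z) * pd er U (t, r, z) + pd ez U (t, r, z) * pd ez U (t, r, z)))"
      unfolding Lu_def lapp_def by (rule green[OF U U t n])
    also have "J (\<lambda>r z. r powr n * (pd er U (t, r, z) * pd er U (t, r, z) + pd ez U (t, r, z) * pd ez U (t, r, z))) = J1"
      unfolding J1_def by (rule J_cong) (simp add: power2_eq_square algebra_simps)
    finally show ?thesis .
  qed
  have comm_r: "pd et (pd er P) (t, r, z) = pd er (pd et P) (t, r, z)" for r z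
    using SM_comm[OF P Basis3(2) Basis3(1) x] .
  have comm_z: "pd et (pd ez P) (t, r, z) = pd ez (pd et P) (t, r, z)" for r z
    using SM_comm[OF P Basis3(3) Basis3(1) x] .
  define V where "V r z = r powr n * (pd et P (t, r, z) * W (t, r, z))" for r z
  have gV: "good V" unfolding V_def using n by (intro good_w dec_mult D) auto
  have EpV: "J Ep = J V"
  proof -
    have g1: "J (\<lambda>r z. r powr n * pd et P (t, r, z) * (pd er (pd er P) (t, r, z) + n / r * pd er P (t, r, z) + pd ez (pd ez P) (t, r, z)))
       = - J (\<lambda>r z. r powr n * (pd er (pd et P) (t, r, z) * pd er P (t, r, z) + pd ez (pd et P) (t, r, z) * pd ez P (t, r, z)))"
      by (rule green[OF Pt P t n])
    have "J (\<lambda>r z. r powr n * (pd er (pd et P) (t, r, z) * pd er P (t, r, z) + pd ez (pd et P) (t, r, z) * pd ez P (t, r, z))) = J Ep"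
      by (rule J_cong) (simp add: Ep_def comm_r comm_z algebra_simps)
    moreover have "J (\<lambda>r z. r powr n * pd et P (t, r, z) * (pd er (pd er P) (t, r, z) + n / r * pd er P (t, r, z) + pd ez (pd ez P) (t, r, z)))
       = J (\<lambda>r z. (-1) * V r z)"
      by (rule J_cong) (simp add: V_def ep[OF t] lapp_def algebra_simps)
    moreover have "J (\<lambda>r z. (-1) * V r z) = - J V" using J_cmult[OF gV, of "-1"] by simp
    ultimately show ?thesis using g1 by simp
  qed
  define PWt where "PWt r z = r powr n * (P (t, r, z) * pd et W (t, r, z))" for r z
  have EpPWt: "J Ep = J PWt"
  proof -
    have g2: "J (\<lambda>r z. r powr n * P (t, r, z) * (pd er (pd er (pd et P)) (t, r, z) + n / r * pd er (pd et P) (t, r, z) + pd ez (pd ez (pd et P)) (t, r, z)))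
       = - J (\<lambda>r z. r powr n * (pd er P (t, r, z) * pd er (pd et P) (t, r, z) + pd ez P (t, r, z) * pd ez (pd et P) (t, r, z)))"
      by (rule green[OF P Pt t n])
    have a: "J (\<lambda>r z. r powr n * (pd er P (t, r, z) * pd er (pd et P) (t, r, z) + pd ez P (t, r, z) * pd ez (pd et P) (t, r, z))) = J Ep"
      by (rule J_cong) (simp add: Ep_def comm_r comm_z)
    have gl: "good (\<lambda>r z. r powr n * P (t, r, z) * lapp n (pd et P) t r z)" by (rule good_lap[OF P Pt t n])
    have "J PWt = J (\<lambda>r z. (-1) * (r powr n * P (t, r, z) * lapp n (pd et P) t r z))"
    proof (rule J_cong)
      fix r z :: real assume r: "0 < r"
      have "pd et W (t, r, z) = - lapp n (pd et P) t r z"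
        by (rule wt_lemma[OF P W t r]) (use ep r in auto)
      then show "PWt r z = (-1) * (r powr n * P (t, r, z) * lapp n (pd et P) t r z)" by (simp add: PWt_def)
    qed
    also have "\<dots> = - J (\<lambda>r z. r powr n * P (t, r, z) * lapp n (pd et P) t r z)" using J_cmult[OF gl, of "-1"] by simp
    also have "J (\<lambda>r z. r powr n * P (t, r, z) * lapp n (pd et P) t r z) = - J Ep"
      using g2 a by (simp add: lapp_def)
    finally show ?thesis by simp
  qed
  define Tp where "Tp r z = r powr n * P (t, r, z) * ((- r * pd ez P (t, r, z)) * pd er W (t, r, z)
            + ((n + 1) / 2 * P (t, r, z) + r * pd er P (t, r, z)) * pd ez W (t, r, z))" for r z
  define Bz where "Bz r z = r powr n * P (t, r, z) * (2 * U (t, r, z) * pd ez U (t, r, z))" for r z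
  define Lw where "Lw r z = r powr n * P (t, r, z) * lapp n W t r z" for r z
  have gTp: "good Tp" unfolding Tp_def by (rule good_transport[OF P W P t n])
  have gLw: "good Lw" unfolding Lw_def by (rule good_lap[OF P W t n])
  have gBz: "good Bz"
  proof -
    have "good (\<lambda>r z. 2 * (r powr n * (P (t, r, z) * (U (t, r, z) * pd ez U (t, r, z)))))"
      using n by (intro good_cmult good_w dec_mult D) auto
    then show ?thesis by (rule good_cong[rotated]) (simp add: Bz_def algebra_simps)
  qed
  have S4: "J PWt = (-1) * J Tp + 1 * J Bz + \<nu>2 * J Lw"
  proof -
    have "J PWt = J (\<lambda>r z. (-1) * Tp r z + 1 * Bz r z + \<nu>2 * Lw r z)"
      by (rule J_cong) (simp add: PWt_def Tp_def Bz_def Lw_def ew field_simps)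
    also have "\<dots> = (-1) * J Tp + 1 * J Bz + \<nu>2 * J Lw" by (rule J_lin3[OF gTp gBz gLw])
    finally show ?thesis .
  qed
  have Tp0: "J Tp = 0" unfolding Tp_def by (rule transport_psi[OF W P t n])
  have BzK: "J Bz = - J K"
  proof -
    have "J Bz = - J (\<lambda>r z. r powr n * (pd ez P (t, r, z) * (U (t, r, z))\<^sup>2))"
      unfolding Bz_def by (rule byparts_z[OF U P t n])
    also have "J (\<lambda>r z. r powr n * (pd ez P (t, r, z) * (U (t, r, z))\<^sup>2)) = J K"
      by (rule J_cong) (simp add: K_def algebra_simps)
    finally show ?thesis .
  qed
  define J2 where "J2 = J (\<lambda>r z. (lapp n P t r z)\<^sup>2 * r powr n)"
  define WW where "WW r z = r powr n * (W (t, r, z) * W (t, r, z))" for r z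
  have gWW: "good WW" unfolding WW_def using n by (intro good_w dec_mult D) auto
  have LwJ2: "J Lw = - J2"
  proof -
    have g3: "J Lw = - J (\<lambda>r z. r powr n * (pd er P (t, r, z) * pd er W (t, r, z) + pd ez P (t, r, z) * pd ez W (t, r, z)))"
      unfolding Lw_def lapp_def by (rule green[OF P W t n])
    have g4: "J (\<lambda>r z. r powr n * W (t, r, z) * lapp n P t r z) = - J (\<lambda>r z. r powr n * (pd er W (t, r, z) * pd er P (t, r, z) + pd ez W (t, r, z) * pd ez P (t, r, z)))"
      unfolding lapp_def by (rule green[OF W P t n])
    have e1: "J (\<lambda>r z. r powr n * (pd er W (t, r, z) * pd er P (t, r, z) + pd ez W (t, r, z) * pd ez P (t, r, z)))
        = J (\<lambda>r z. r powr n * (pd er P (t, r, z) * pd er W (t, r, z) + pd ez P (t, r, z) * pd ez W (t, r, z)))"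
      by (rule J_cong) (simp add: algebra_simps)
    have e2: "J (\<lambda>r z. r powr n * W (t, r, z) * lapp n P t r z) = J (\<lambda>r z. (-1) * WW r z)"
      by (rule J_cong) (simp add: WW_def ep[OF t])
    have e3: "J (\<lambda>r z. (-1) * WW r z) = - J WW" using J_cmult[OF gWW, of "-1"] by simp
    have e4: "J2 = J WW"
      unfolding J2_def by (rule J_cong) (simp add: WW_def ep[OF t] power2_eq_square algebra_simps)
    show ?thesis using g3 g4 e1 e2 e3 e4 by simp
  qed
  have hEp: "J Ep = - J K - \<nu>2 * J2" using EpPWt S4 Tp0 BzK LwJ2 by simp
  have hEu: "J Eu = - (n + 1) / 4 * J K + 2 * J K - \<nu>1 * J1" using S2 TuK LuJ1 by (simp add: algebra_simps)
  have "2 * J Eu + (2 * c) * J Ep = 2 * (- \<nu>1 * J1 - \<nu>2 * ((7 - n) / 4) * J2)"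
    unfolding hEp hEu c_def by (simp add: field_simps)
  then show ?thesis using S1 unfolding J1_def J2_def by simp
qed


lemma cu_app: "cu G t r z = G (t, r, z)" by (simp add: cu_def)

lemma lap_pd: "lap_n n f t r z = lapp n (uc f) t r z"
  by (simp add: lap_n_def lapp_def dr_pd dz_pd cu_app)

lemma nonneg_J: "(\<And>r z. 0 < r \<Longrightarrow> 0 \<le> g r z) \<Longrightarrow> 0 \<le> J g"
  unfolding J_def set_lebesgue_integral_def
  by (intro Bochner_Integration.integral_nonneg_AE AE_I2) (auto simp: indicator_def)

theorem mainTheorem4:
  fixes n m \<nu>1 \<nu>2 T :: real
    and u1 \<omega>1 \<psi>1 :: "real \<Rightarrow> real \<Rightarrow> real \<Rightarrow> real"
    and ur uz :: "real \<Rightarrow> real \<Rightarrow> real \<Rightarrow> real"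
  assumes n_ge: "2 \<le> n" and n_lt: "n < 7"
    and m_def: "m = (n + 3) / 2"
    and nu1: "0 \<le> \<nu>1" and nu2: "0 \<le> \<nu>2" and T_pos: "0 < T"
    and smooth: "\<forall>f\<in>{u1, \<omega>1, \<psi>1}.
                   smooth_on ({0<..<T} \<times> UNIV \<times> UNIV) (\<lambda>(t, r, z). f t r z)"
    and even: "\<forall>f\<in>{u1, \<omega>1, \<psi>1}. \<forall>t r z. f t (- r) z = f t r z"
    and decay: "\<forall>f\<in>{u1, \<omega>1, \<psi>1}. rapid_decay T (\<lambda>(t, r, z). f t r z)"
    and ur_def: "\<And>t r z. ur t r z = - r * dz \<psi>1 t r z"
    and uz_def: "\<And>t r z. uz t r z = (m - 1) * \<psi>1 t r z + r * dr \<psi>1 t r z"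
    and eq_u: "\<And>t r z. 0 < t \<Longrightarrow> t < T \<Longrightarrow> 0 < r \<Longrightarrow>
        dt u1 t r z + ur t r z * dr u1 t r z + uz t r z * dz u1 t r z
          = 2 * u1 t r z * dz \<psi>1 t r z + \<nu>1 * lap_n n u1 t r z"
    and eq_w: "\<And>t r z. 0 < t \<Longrightarrow> t < T \<Longrightarrow> 0 < r \<Longrightarrow>
        dt \<omega>1 t r z + ur t r z * dr \<omega>1 t r z + uz t r z * dz \<omega>1 t r z
          = dz (\<lambda>t r z. (u1 t r z)\<^sup>2) t r z + \<nu>2 * lap_n n \<omega>1 t r z"
    and eq_psi: "\<And>t r z. 0 < t \<Longrightarrow> t < T \<Longrightarrow> 0 < r \<Longrightarrow>
        - lap_n n \<psi>1 t r z = \<omega>1 t r z"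
  shows "(\<forall>t. 0 < t \<and> t < T \<longrightarrow>
            (gen_energy n u1 \<psi>1 has_real_derivative
               2 * (- \<nu>1 * (LINT z|lborel. (LINT r:{0<..}|lborel.
                               ((dr u1 t r z)\<^sup>2 + (dz u1 t r z)\<^sup>2) * r powr n))
                    - \<nu>2 * ((7 - n) / 4) * (LINT z|lborel. (LINT r:{0<..}|lborel.
                               (lap_n n \<psi>1 t r z)\<^sup>2 * r powr n)))) (at t))
       \<and> (\<forall>t. 0 < t \<and> t < T \<longrightarrow> 0 \<le> gen_energy n u1 \<psi>1 t)
       \<and> (\<forall>s t. 0 < s \<and> s \<le> t \<and> t < T \<longrightarrow> gen_energy n u1 \<psi>1 t \<le> gen_energy n u1 \<psi>1 s)
       \<and> (\<nu>1 = 0 \<and> \<nu>2 = 0 \<longrightarrow>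
            (\<forall>s t. 0 < s \<and> s < T \<and> 0 < t \<and> t < T \<longrightarrow> gen_energy n u1 \<psi>1 t = gen_energy n u1 \<psi>1 s))"
proof -
  define U where "U = uc u1"
  define P where "P = uc \<psi>1"
  define W where "W = uc \<omega>1"
  have n: "2 \<le> n" "n \<le> 7" using n_ge n_lt by auto
  have SMf: "SM T (uc f)" if "f \<in> {u1, \<omega>1, \<psi>1}" for f
    using smooth decay that unfolding SM_def SS_def uc_def by blast
  have U: "SM T U" and P: "SM T P" and W: "SM T W" using SMf by (auto simp: U_def P_def W_def)
  have m1: "m - 1 = (n + 1) / 2" using m_def by simp
  note cv = dr_pd dz_pd dt_pd cu_app lap_pd U_def[symmetric] P_def[symmetric] W_def[symmetric]
  have u1e: "u1 t r z = U (t, r, z)" for t r z by (simp add: U_def uc_def)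
  have w1e: "\<omega>1 t r z = W (t, r, z)" for t r z by (simp add: W_def uc_def)
  have p1e: "\<psi>1 t r z = P (t, r, z)" for t r z by (simp add: P_def uc_def)
  note cv2 = cv u1e w1e p1e
  have sq: "dz (\<lambda>t r z. (u1 t r z)\<^sup>2) t r z = 2 * U (t, r, z) * pd ez U (t, r, z)" if "0 < t" "t < T" for t r z
    unfolding dz_def u1e
    by (rule DERIV_imp_deriv) (use DERIV_power[OF SM_dZ[OF U that, of r z], of 2] in \<open>simp add: algebra_simps\<close>)
  have ep: "W (\<tau>, r, z) = - lapp n P \<tau> r z" if "0 < \<tau>" "\<tau> < T" "0 < r" for \<tau> r z
    using eq_psi[OF that, of z] by (simp add: cv2)
  define c where "c = (7 - n) / 4"
  have c0: "0 < c" using n_lt by (simp add: c_def)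
  have GE: "gen_energy n u1 \<psi>1 = (\<lambda>\<tau>. J (\<lambda>r z. ((U (\<tau>, r, z))\<^sup>2 + c * ((pd er P (\<tau>, r, z))\<^sup>2 + (pd ez P (\<tau>, r, z))\<^sup>2)) * r powr n))"
    by (simp add: fun_eq_iff gen_energy_def J_def c_def cv2)
  define J1 where "J1 t = J (\<lambda>r z. ((pd er U (t, r, z))\<^sup>2 + (pd ez U (t, r, z))\<^sup>2) * r powr n)" for t
  define J2 where "J2 t = J (\<lambda>r z. (lapp n P t r z)\<^sup>2 * r powr n)" for t
  have J1e: "(LINT z|lborel. (LINT r:{0<..}|lborel. ((dr u1 t r z)\<^sup>2 + (dz u1 t r z)\<^sup>2) * r powr n)) = J1 t" for t
    by (simp add: J1_def J_def cv2)
  have J2e: "(LINT z|lborel. (LINT r:{0<..}|lborel. (lap_n n \<psi>1 t r z)\<^sup>2 * r powr n)) = J2 t" for t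
    by (simp add: J2_def J_def cv2)
  have DER: "(gen_energy n u1 \<psi>1 has_real_derivative 2 * (- \<nu>1 * J1 t - \<nu>2 * ((7 - n) / 4) * J2 t)) (at t)"
    if t: "0 < t" "t < T" for t
  proof -
    have "J (\<lambda>r z. (2 * U (t, r, z) * pd et U (t, r, z) + (7 - n) / 4 * (2 * pd er P (t, r, z) * pd et (pd er P) (t, r, z)
          + 2 * pd ez P (t, r, z) * pd et (pd ez P) (t, r, z))) * r powr n)
       = 2 * (- \<nu>1 * J1 t - \<nu>2 * ((7 - n) / 4) * J2 t)"
      unfolding J1_def J2_def
    proof (rule energy_identity[OF U P W t n])
      show "pd et U (t, r, z) = - ((- r * pd ez P (t, r, z)) * pd er U (t, r, z)
        + ((n + 1) / 2 * P (t, r, z) + r * pd er P (t, r, z)) * pd ez U (t, r, z))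
        + 2 * U (t, r, z) * pd ez P (t, r, z) + \<nu>1 * lapp n U t r z" if r: "0 < r" for r z
        using eq_u[OF t r, of z] by (simp add: cv2 ur_def uz_def m1 algebra_simps)
      show "pd et W (t, r, z) = - ((- r * pd ez P (t, r, z)) * pd er W (t, r, z)
        + ((n + 1) / 2 * P (t, r, z) + r * pd er P (t, r, z)) * pd ez W (t, r, z))
        + 2 * U (t, r, z) * pd ez U (t, r, z) + \<nu>2 * lapp n W t r z" if r: "0 < r" for r z
        using eq_w[OF t r, of z] sq[OF t, of r z] by (simp add: cv2 ur_def uz_def m1 algebra_simps)
      show "W (\<tau>, r, z) = - lapp n P \<tau> r z" if "0 < \<tau>" "\<tau> < T" "0 < r" for \<tau> r z
        using ep that by blast
    qed
    then show ?thesis unfolding GE using energy_deriv[OF U P t n, of c] by (simp add: c_def)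
  qed
  have J1n: "0 \<le> J1 t" for t unfolding J1_def by (rule nonneg_J) simp
  have J2n: "0 \<le> J2 t" for t unfolding J2_def by (rule nonneg_J) simp
  have dneg: "2 * (- \<nu>1 * J1 t - \<nu>2 * ((7 - n) / 4) * J2 t) \<le> 0" for t
  proof -
    have "0 \<le> \<nu>1 * J1 t" using nu1 J1n by simp
    moreover have "0 \<le> \<nu>2 * ((7 - n) / 4) * J2 t" using nu2 J2n n_lt by simp
    moreover have "2 * (- \<nu>1 * J1 t - \<nu>2 * ((7 - n) / 4) * J2 t) = -2 * (\<nu>1 * J1 t) - 2 * (\<nu>2 * ((7 - n) / 4) * J2 t)"
      by (simp add: algebra_simps)
    ultimately show ?thesis by (smt (verit))
  qed
  show ?thesis
  proof (intro conjI allI impI)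
    fix t assume "0 < t \<and> t < T"
    then show "(gen_energy n u1 \<psi>1 has_real_derivative
               2 * (- \<nu>1 * (LINT z|lborel. (LINT r:{0<..}|lborel.
                               ((dr u1 t r z)\<^sup>2 + (dz u1 t r z)\<^sup>2) * r powr n))
                    - \<nu>2 * ((7 - n) / 4) * (LINT z|lborel. (LINT r:{0<..}|lborel.
                               (lap_n n \<psi>1 t r z)\<^sup>2 * r powr n)))) (at t)"
      unfolding J1e J2e using DER by blast
  next
    fix t assume "0 < t \<and> t < T"
    show "0 \<le> gen_energy n u1 \<psi>1 t" unfolding GE using c0
      by (intro nonneg_J) (auto intro!: mult_nonneg_nonneg add_nonneg_nonneg)
  next
    fix s t assume st: "0 < s \<and> s \<le> t \<and> t < T"
    show "gen_energy n u1 \<psi>1 t \<le> gen_energy n u1 \<psi>1 s"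
    proof (rule DERIV_nonpos_imp_nonincreasing[where f="gen_energy n u1 \<psi>1" and a=s and b=t])
      show "s \<le> t" using st by simp
      show "\<exists>y. (gen_energy n u1 \<psi>1 has_real_derivative y) (at x) \<and> y \<le> 0" if "s \<le> x" "x \<le> t" for x
        using DER[of x] dneg[of x] st that by auto
    qed
  next
    fix s t assume nu: "\<nu>1 = 0 \<and> \<nu>2 = 0" and st: "0 < s \<and> s < T \<and> 0 < t \<and> t < T"
    show "gen_energy n u1 \<psi>1 t = gen_energy n u1 \<psi>1 s"
      by (rule DERIV_isconst3[where a=0 and b=T]) (use st DER nu T_pos in auto)
  qed
qed


end
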